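(* Let $\mathcal{A}$ be a finite-dimensional $\mathbb{C}^*$-weak Hopf algebra, $\rho:\mathcal{A}\to M_d(\mathbb{C})$ a $*$-representation and $(v_{ij})_{1\le i,j\le d}$ a corepresentation with $S(v_{ij})=v_{ji}^*$ (so $d_\rho=d_v=d$). Let $W,P,Q$ be the operators on $\mathbb{C}^d\otimes\mathbb{C}^d$ given by $\langle i,a|W|b,j\rangle=\rho_{ab}(v_{ij})$, $\langle i,a|P|j,b\rangle=\sum\epsilon(1_{(1)}v_{ij})\rho_{ab}(1_{(2)})$, $\langle a,i|Q|b,j\rangle=\sum\rho_{ab}(1_{(1)})\epsilon(v_{ij}1_{(2)})$, and let $U$ be a unitary with $W=PU=UQ$. Let $L\ge2$ and consider a periodic chain of $2L$ qudits $\mathbb{C}^d$ at sites $\tfrac12,1,\tfrac32,\dots,L$ (site labels taken modulo $L$). For a two-site operator $X$ and $j\in\tfrac12\mathbb{Z}$, let $X_{j,j+1/2}$ denote $X$ acting on sites $j,j+\tfrac12$ (in this order). Define $$\hat{\mathbf P}=\prod_{j=1}^LP_{j,j+1/2}\prod_{j=1}^LQ_{j-1/2,j},\quad \hat{\mathbf P}_{1/2}=\prod_{j=1}^LQ_{j,j+1/2}\prod_{j=1}^LP_{j-1/2,j},\quad \hat{\mathbf U}_o=\prod_{j=1}^LU_{j-1/2,j},\quad \hat{\mathbf U}_e=\prod_{j=1}^LU_{j,j+1/2}.$$ Then $\hat{\mathbf P}_{1/2}\hat{\mathbf U}_o\hat{\mathbf P}=\hat{\mathbf U}_o\hat{\mathbf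 P}$ and $\hat{\mathbf P}\hat{\mathbf U}_e\hat{\mathbf P}_{1/2}=\hat{\mathbf U}_e\hat{\mathbf P}_{1/2}$. Consequently $\hat{\mathbf U}_o$ maps the range of $\hat{\mathbf P}$ onto the range of $\hat{\mathbf P}_{1/2}$, $\hat{\mathbf U}_e$ maps the range of $\hat{\mathbf P}_{1/2}$ onto the range of $\hat{\mathbf P}$, and $\hat{\mathbf U}=\hat{\mathbf U}_e\hat{\mathbf U}_o$ leaves the range of $\hat{\mathbf P}$ invariant.
   Context: A weak bialgebra is a finite-dimensional unital associative algebra and coassociative counital coalgebra with $\Delta(xy)=\Delta(x)\Delta(y)$, $\Delta^{(2)}(1)=(1\otimes\Delta(1))(\Delta(1)\otimes1)=(\Delta(1)\otimes1)(1\otimes\Delta(1))$, $\epsilon(xyz)=\sum\epsilon(xy_{(1)})\epsilon(y_{(2)}z)=\sum\epsilon(xy_{(2)})\epsilon(y_{(1)}z)$. With $\epsilon_s(x)=\sum1_{(1)}\epsilon(x1_{(2)})$, $\epsilon_t(x)=\sum\epsilon(1_{(1)}x)1_{(2)}$, a weak Hopf algebra has a linear $S$ with $\sum S(x_{(1)})x_{(2)}=\epsilon_s(x)$, $\sum x_{(1)}S(x_{(2)})=\epsilon_t(x)$, $\sum S(x_{(1)})x_{(2)}S(x_{(3)})=S(x)$. A $\mathbb{C}^*$-weak Hopf algebra has an antilinear involution $*$ with $(xy)^*=y^*x^*$, $\Delta(x^* )=\Delta(x)^*$, and a faithful $*$-representation. A $*$-representation satisfies $\rho(x^* )=\rho(x)^\dagger$;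 a corepresentation satisfies $\Delta(v_{ij})=\sum_kv_{ik}\otimes v_{kj}$, $\epsilon(v_{ij})=\delta_{ij}$. For such data $P,Q$ are orthogonal projections with $WW^\dagger=P$, $W^\dagger W=Q$, so a unitary $U$ with $W=PU=UQ$ exists; the factors in each product defining $\hat{\mathbf P}$, $\hat{\mathbf P}_{1/2}$ mutually commute. *)

theory Defs
  imports "HOL-Analysis.Analysis"
begin

section \<open>Coordinates: a finite-dimensional algebra A is complex ^ 'b (basis indexed by 'b)\<close>

definition ebas :: "'b::finite \<Rightarrow> complex ^ 'b" where
  "ebas b = axis b 1"

definition clin_map :: "(complex ^ 'a \<Rightarrow> complex ^ 'c) \<Rightarrow> bool" where
  "clin_map f \<longleftrightarrow> (\<forall>x y. f (x + y) = f x + f y) \<and> (\<forall>c x. f (c *s x) = c *s f x)"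

definition clin_fun :: "(complex ^ 'a \<Rightarrow> complex) \<Rightarrow> bool" where
  "clin_fun f \<longleftrightarrow> (\<forall>x y. f (x + y) = f x + f y) \<and> (\<forall>c x. f (c *s x) = c * f x)"

definition tens :: "complex ^ 'a \<Rightarrow> complex ^ 'c \<Rightarrow> complex ^ ('a \<times> 'c)" where
  "tens x y = vec_lambda (\<lambda>(i, j). x $ i * y $ j)"

text \<open>(Delta tensor id) and (id tensor Delta) applied to an element of A tensor A\<close>
definition cop_left :: "(complex ^ 'b \<Rightarrow> complex ^ ('b \<times> 'b)) \<Rightarrow> complex ^ ('b::finite \<times> 'b)
    \<Rightarrow> complex ^ ('b \<times> 'b \<times> 'b)" where
  "cop_left cop X = vec_lambda (\<lambda>(p, q, r). \<Sum>i\<in>UNIV. X $ (i, r) * cop (ebas i) $ (p, q))"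

definition cop_right :: "(complex ^ 'b \<Rightarrow> complex ^ ('b \<times> 'b)) \<Rightarrow> complex ^ ('b::finite \<times> 'b)
    \<Rightarrow> complex ^ ('b \<times> 'b \<times> 'b)" where
  "cop_right cop X = vec_lambda (\<lambda>(p, q, r). \<Sum>j\<in>UNIV. X $ (p, j) * cop (ebas j) $ (q, r))"

definition mul2 :: "(complex ^ 'b \<Rightarrow> complex ^ 'b \<Rightarrow> complex ^ 'b) \<Rightarrow>
    complex ^ ('b::finite \<times> 'b) \<Rightarrow> complex ^ ('b \<times> 'b) \<Rightarrow> complex ^ ('b \<times> 'b)" where
  "mul2 mul X Y = vec_lambda (\<lambda>(p, q). \<Sum>i\<in>UNIV. \<Sum>j\<in>UNIV. \<Sum>k\<in>UNIV. \<Sum>l\<in>UNIV.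
      X $ (i, j) * Y $ (k, l) * mul (ebas i) (ebas k) $ p * mul (ebas j) (ebas l) $ q)"

definition mul3 :: "(complex ^ 'b \<Rightarrow> complex ^ 'b \<Rightarrow> complex ^ 'b) \<Rightarrow>
    complex ^ ('b::finite \<times> 'b \<times> 'b) \<Rightarrow> complex ^ ('b \<times> 'b \<times> 'b) \<Rightarrow> complex ^ ('b \<times> 'b \<times> 'b)" where
  "mul3 mul X Y = vec_lambda (\<lambda>(p, q, r). \<Sum>i\<in>UNIV. \<Sum>j\<in>UNIV. \<Sum>k\<in>UNIV.
      \<Sum>i'\<in>UNIV. \<Sum>j'\<in>UNIV. \<Sum>k'\<in>UNIV.
      X $ (i, j, k) * Y $ (i', j', k') * mul (ebas i) (ebas i') $ p
        * mul (ebas j) (ebas j') $ q * mul (ebas k) (ebas k') $ r)"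

definition star2 :: "(complex ^ 'b \<Rightarrow> complex ^ 'b) \<Rightarrow> complex ^ ('b::finite \<times> 'b) \<Rightarrow> complex ^ ('b \<times> 'b)" where
  "star2 st X = vec_lambda (\<lambda>(p, q). \<Sum>i\<in>UNIV. \<Sum>j\<in>UNIV.
      cnj (X $ (i, j)) * st (ebas i) $ p * st (ebas j) $ q)"

definition weak_bialgebra ::
  "(complex ^ 'b \<Rightarrow> complex ^ 'b \<Rightarrow> complex ^ 'b) \<Rightarrow> complex ^ 'b \<Rightarrow>
   (complex ^ 'b \<Rightarrow> complex ^ ('b \<times> 'b)) \<Rightarrow> (complex ^ 'b::finite \<Rightarrow> complex) \<Rightarrow> bool" where
  "weak_bialgebra mul one cop cou \<longleftrightarrow>
     \<comment> \<open>unital associative algebra\<close>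
     (\<forall>x. clin_map (mul x)) \<and> (\<forall>y. clin_map (\<lambda>x. mul x y)) \<and>
     (\<forall>x y z. mul (mul x y) z = mul x (mul y z)) \<and>
     (\<forall>x. mul one x = x \<and> mul x one = x) \<and>
     \<comment> \<open>coassociative counital coalgebra\<close>
     clin_map cop \<and> clin_fun cou \<and>
     (\<forall>x. cop_left cop (cop x) = cop_right cop (cop x)) \<and>
     (\<forall>x k. (\<Sum>i\<in>UNIV. cop x $ (i, k) * cou (ebas i)) = x $ k) \<and>
     (\<forall>x k. (\<Sum>j\<in>UNIV. cop x $ (k, j) * cou (ebas j)) = x $ k) \<and>
     \<comment> \<open>weak bialgebra axioms\<close>
     (\<forall>x y. cop (mul x y) = mul2 mul (cop x) (cop y)) \<and>
     (let one1 = vec_lambda (\<lambda>(p, q, r). one $ p * cop one $ (q, r));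
          one2 = vec_lambda (\<lambda>(p, q, r). cop one $ (p, q) * one $ r)
      in cop_right cop (cop one) = mul3 mul one1 one2 \<and>
         cop_right cop (cop one) = mul3 mul one2 one1) \<and>
     (\<forall>x y z.
        cou (mul (mul x y) z) =
          (\<Sum>i\<in>UNIV. \<Sum>j\<in>UNIV. cop y $ (i, j) * cou (mul x (ebas i)) * cou (mul (ebas j) z)) \<and>
        cou (mul (mul x y) z) =
          (\<Sum>i\<in>UNIV. \<Sum>j\<in>UNIV. cop y $ (i, j) * cou (mul x (ebas j)) * cou (mul (ebas i) z)))"

definition eps_s :: "(complex ^ 'b \<Rightarrow> complex ^ 'b \<Rightarrow> complex ^ 'b) \<Rightarrow> complex ^ 'b \<Rightarrow>
   (complex ^ 'b \<Rightarrow> complex ^ ('b \<times> 'b)) \<Rightarrow> (complex ^ 'b::finite \<Rightarrow> complex) \<Rightarrow> complex ^ 'b \<Rightarrow> complex ^ 'b" where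
  "eps_s mul one cop cou x =
     (\<Sum>i\<in>UNIV. \<Sum>j\<in>UNIV. (cop one $ (i, j) * cou (mul x (ebas j))) *s ebas i)"

definition eps_t :: "(complex ^ 'b \<Rightarrow> complex ^ 'b \<Rightarrow> complex ^ 'b) \<Rightarrow> complex ^ 'b \<Rightarrow>
   (complex ^ 'b \<Rightarrow> complex ^ ('b \<times> 'b)) \<Rightarrow> (complex ^ 'b::finite \<Rightarrow> complex) \<Rightarrow> complex ^ 'b \<Rightarrow> complex ^ 'b" where
  "eps_t mul one cop cou x =
     (\<Sum>i\<in>UNIV. \<Sum>j\<in>UNIV. (cop one $ (i, j) * cou (mul (ebas i) x)) *s ebas j)"

definition weak_hopf ::
  "(complex ^ 'b \<Rightarrow> complex ^ 'b \<Rightarrow> complex ^ 'b) \<Rightarrow> complex ^ 'b \<Rightarrow>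
   (complex ^ 'b \<Rightarrow> complex ^ ('b \<times> 'b)) \<Rightarrow> (complex ^ 'b::finite \<Rightarrow> complex) \<Rightarrow>
   (complex ^ 'b \<Rightarrow> complex ^ 'b) \<Rightarrow> bool" where
  "weak_hopf mul one cop cou S \<longleftrightarrow>
     weak_bialgebra mul one cop cou \<and> clin_map S \<and>
     (\<forall>x. (\<Sum>i\<in>UNIV. \<Sum>j\<in>UNIV. cop x $ (i, j) *s mul (S (ebas i)) (ebas j)) = eps_s mul one cop cou x) \<and>
     (\<forall>x. (\<Sum>i\<in>UNIV. \<Sum>j\<in>UNIV. cop x $ (i, j) *s mul (ebas i) (S (ebas j))) = eps_t mul one cop cou x) \<and>
     (\<forall>x. (\<Sum>i\<in>UNIV. \<Sum>j\<in>UNIV. \<Sum>k\<in>UNIV.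
            cop_right cop (cop x) $ (i, j, k) *s mul (mul (S (ebas i)) (ebas j)) (S (ebas k))) = S x)"

definition star_rep_nat ::
  "(complex ^ 'b \<Rightarrow> complex ^ 'b \<Rightarrow> complex ^ 'b) \<Rightarrow> complex ^ 'b \<Rightarrow> (complex ^ 'b \<Rightarrow> complex ^ 'b)
   \<Rightarrow> nat \<Rightarrow> (complex ^ 'b \<Rightarrow> nat \<Rightarrow> nat \<Rightarrow> complex) \<Rightarrow> bool" where
  "star_rep_nat mul one st n \<pi> \<longleftrightarrow>
     (\<forall>x y i j. i < n \<longrightarrow> j < n \<longrightarrow> \<pi> (x + y) i j = \<pi> x i j + \<pi> y i j) \<and>
     (\<forall>c x i j. i < n \<longrightarrow> j < n \<longrightarrow> \<pi> (c *s x) i j = c * \<pi> x i j) \<and>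
     (\<forall>x y i j. i < n \<longrightarrow> j < n \<longrightarrow> \<pi> (mul x y) i j = (\<Sum>k<n. \<pi> x i k * \<pi> y k j)) \<and>
     (\<forall>i j. i < n \<longrightarrow> j < n \<longrightarrow> \<pi> one i j = (if i = j then 1 else 0)) \<and>
     (\<forall>x i j. i < n \<longrightarrow> j < n \<longrightarrow> \<pi> (st x) i j = cnj (\<pi> x j i))"

definition c_star_weak_hopf ::
  "(complex ^ 'b \<Rightarrow> complex ^ 'b \<Rightarrow> complex ^ 'b) \<Rightarrow> complex ^ 'b \<Rightarrow>
   (complex ^ 'b \<Rightarrow> complex ^ ('b \<times> 'b)) \<Rightarrow> (complex ^ 'b::finite \<Rightarrow> complex) \<Rightarrow>
   (complex ^ 'b \<Rightarrow> complex ^ 'b) \<Rightarrow> (complex ^ 'b \<Rightarrow> complex ^ 'b) \<Rightarrow> bool" where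
  "c_star_weak_hopf mul one cop cou S st \<longleftrightarrow>
     weak_hopf mul one cop cou S \<and>
     (\<forall>x y. st (x + y) = st x + st y) \<and>
     (\<forall>c x. st (c *s x) = cnj c *s st x) \<and>
     (\<forall>x. st (st x) = x) \<and>
     (\<forall>x y. st (mul x y) = mul (st y) (st x)) \<and>
     (\<forall>x. cop (st x) = star2 st (cop x)) \<and>
     (\<exists>n \<pi>. star_rep_nat mul one st n \<pi> \<and>
        (\<forall>x y. (\<forall>i j. i < n \<longrightarrow> j < n \<longrightarrow> \<pi> x i j = \<pi> y i j) \<longrightarrow> x = y))"

definition adj :: "complex ^ 'n ^ 'm \<Rightarrow> complex ^ 'm ^ 'n" where
  "adj M = (\<chi> i j. cnj (M $ j $ i))"

definition unitary_mat :: "complex ^ 'n::finite ^ 'n \<Rightarrow> bool" where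
  "unitary_mat U \<longleftrightarrow> U ** adj U = mat 1 \<and> adj U ** U = mat 1"

text \<open>*-representation into M_d(C), d = CARD('d)\<close>
definition star_rep ::
  "(complex ^ 'b \<Rightarrow> complex ^ 'b \<Rightarrow> complex ^ 'b) \<Rightarrow> complex ^ 'b \<Rightarrow> (complex ^ 'b \<Rightarrow> complex ^ 'b)
   \<Rightarrow> (complex ^ 'b \<Rightarrow> complex ^ 'd ^ 'd) \<Rightarrow> bool" where
  "star_rep mul one st \<rho> \<longleftrightarrow>
     (\<forall>x y. \<rho> (x + y) = \<rho> x + \<rho> y) \<and> (\<forall>c x a b. \<rho> (c *s x) $ a $ b = c * \<rho> x $ a $ b) \<and>
     (\<forall>x y. \<rho> (mul x y) = \<rho> x ** \<rho> y) \<and> \<rho> one = mat 1 \<and>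
     (\<forall>x. \<rho> (st x) = adj (\<rho> x))"

definition corep ::
  "(complex ^ 'b \<Rightarrow> complex ^ ('b \<times> 'b)) \<Rightarrow> (complex ^ 'b \<Rightarrow> complex) \<Rightarrow> ('d::finite \<Rightarrow> 'd \<Rightarrow> complex ^ 'b) \<Rightarrow> bool" where
  "corep cop cou v \<longleftrightarrow>
     (\<forall>i j. cop (v i j) = (\<Sum>k\<in>UNIV. tens (v i k) (v k j))) \<and>
     (\<forall>i j. cou (v i j) = (if i = j then 1 else 0))"

section \<open>Periodic chain of 2L qudits. Site label j (j in 1/2 Z mod L) is the element 2j of 'L bit0 (= Z/2L).\<close>

definition emb2 :: "'s::finite \<Rightarrow> 's \<Rightarrow> complex ^ ('d::finite \<times> 'd) ^ ('d \<times> 'd) \<Rightarrow> complex ^ ('d ^ 's) ^ ('d ^ 's)" where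
  "emb2 k k' X = (\<chi> \<sigma> \<tau>. if (\<forall>m. m \<noteq> k \<and> m \<noteq> k' \<longrightarrow> \<sigma> $ m = \<tau> $ m)
                        then X $ (\<sigma> $ k, \<sigma> $ k') $ (\<tau> $ k, \<tau> $ k') else 0)"

definition mat_prod_list :: "(complex ^ 'n::finite ^ 'n) list \<Rightarrow> complex ^ 'n ^ 'n" where
  "mat_prod_list Ms = foldr (**) Ms (mat 1)"

text \<open>site with doubled label m, i.e. the physical site m/2\<close>
definition site :: "nat \<Rightarrow> 'L::finite bit0" where
  "site m = of_nat m"

definition prod_int_half :: "complex ^ ('d::finite \<times> 'd) ^ ('d \<times> 'd) \<Rightarrow> complex ^ ('d ^ 'L::finite bit0) ^ ('d ^ 'L bit0)" where
  "prod_int_half X = mat_prod_list (map (\<lambda>j. emb2 (site (2 * j) :: 'L bit0) (site (2 * j + 1)) X) [1..<CARD('L) + 1])"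

definition prod_half_int :: "complex ^ ('d::finite \<times> 'd) ^ ('d \<times> 'd) \<Rightarrow> complex ^ ('d ^ 'L::finite bit0) ^ ('d ^ 'L bit0)" where
  "prod_half_int X = mat_prod_list (map (\<lambda>j. emb2 (site (2 * j - 1) :: 'L bit0) (site (2 * j)) X) [1..<CARD('L) + 1])"

end

theory Submission
  imports Defs "HOL-Analysis.Analysis"
begin

lemma ebas_nth: "ebas b $ p = (if p = b then 1 else 0)"
  by (simp add: ebas_def axis_def)

lemma vec_expand: "x = (\<Sum>p\<in>UNIV. x $ p *s ebas p)"
  by (simp add: vec_eq_iff sum_component ebas_nth if_distrib cong: if_cong)

lemma clin_fun_0: "clin_fun f \<Longrightarrow> f 0 = 0"
  unfolding clin_fun_def by (metis mult_zero_left vector_smult_lzero)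

lemma clin_fun_sum: "clin_fun f \<Longrightarrow> f (\<Sum>p\<in>A. g p) = (\<Sum>p\<in>A. f (g p))"
  by (induction A rule: infinite_finite_induct) (auto simp: clin_fun_0 clin_fun_def)

lemma lin_expand: "clin_fun f \<Longrightarrow> f x = (\<Sum>p\<in>UNIV. x $ p * f (ebas p))"
  apply (subst vec_expand)
  apply (subst clin_fun_sum, assumption)
  by (simp add: clin_fun_def)

locale wh =
  fixes mul :: "complex ^ 'b::finite \<Rightarrow> complex ^ 'b \<Rightarrow> complex ^ 'b"
    and one :: "complex ^ 'b"
    and cop :: "complex ^ 'b \<Rightarrow> complex ^ ('b \<times> 'b)"
    and cou :: "complex ^ 'b \<Rightarrow> complex"
    and S st :: "complex ^ 'b \<Rightarrow> complex ^ 'b"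
    and \<rho> :: "complex ^ 'b \<Rightarrow> complex ^ 'd::finite ^ 'd"
    and v :: "'d \<Rightarrow> 'd \<Rightarrow> complex ^ 'b"
  assumes A: "c_star_weak_hopf mul one cop cou S st"
    and rho: "star_rep mul one st \<rho>"
    and v: "corep cop cou v"
    and Sv: "\<forall>i j. S (v i j) = st (v j i)"
begin

lemma WB: "weak_bialgebra mul one cop cou" and WH: "weak_hopf mul one cop cou S"
  using A unfolding c_star_weak_hopf_def weak_hopf_def by auto

lemma mul_l: "clin_map (mul x)" and mul_r: "clin_map (\<lambda>x. mul x y)"
  and assoc: "mul (mul x y) z = mul x (mul y z)"
  and one_l: "mul one x = x" and one_r: "mul x one = x"
  and cop_lin: "clin_map cop" and cou_lin: "clin_fun cou"
  and coassoc: "cop_left cop (cop x) = cop_right cop (cop x)"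
  and counit1: "(\<Sum>i\<in>UNIV. cop x $ (i, k) * cou (ebas i)) = x $ k"
  and counit2: "(\<Sum>j\<in>UNIV. cop x $ (k, j) * cou (ebas j)) = x $ k"
  and cop_mul: "cop (mul x y) = mul2 mul (cop x) (cop y)"
  using WB unfolding weak_bialgebra_def by auto

lemma D2: "cop_right cop (cop one) = mul3 mul (vec_lambda (\<lambda>(p, q, r). one $ p * cop one $ (q, r)))
                                                (vec_lambda (\<lambda>(p, q, r). cop one $ (p, q) * one $ r))"
   "cop_right cop (cop one) = mul3 mul (vec_lambda (\<lambda>(p, q, r). cop one $ (p, q) * one $ r))
                                                (vec_lambda (\<lambda>(p, q, r). one $ p * cop one $ (q, r)))"
  using WB unfolding weak_bialgebra_def Let_def by auto

lemma eps1: "cou (mul (mul x y) z) =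
          (\<Sum>i\<in>UNIV. \<Sum>j\<in>UNIV. cop y $ (i, j) * cou (mul x (ebas i)) * cou (mul (ebas j) z))"
 and eps2: "cou (mul (mul x y) z) =
          (\<Sum>i\<in>UNIV. \<Sum>j\<in>UNIV. cop y $ (i, j) * cou (mul x (ebas j)) * cou (mul (ebas i) z))"
  using WB unfolding weak_bialgebra_def by blast+

lemma S_lin: "clin_map S"
  and hopf_t: "(\<Sum>i\<in>UNIV. \<Sum>j\<in>UNIV. cop x $ (i, j) *s mul (ebas i) (S (ebas j))) = eps_t mul one cop cou x"
  using WH unfolding weak_hopf_def by auto

lemma rho_add: "\<rho> (x + y) = \<rho> x + \<rho> y" and rho_smult: "\<rho> (c *s x) $ a $ b = c * \<rho> x $ a $ b"
  and rho_mul: "\<rho> (mul x y) = \<rho> x ** \<rho> y" and rho_one: "\<rho> one = mat 1"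
  and rho_st: "\<rho> (st x) = adj (\<rho> x)"
  using rho unfolding star_rep_def by auto

lemma v_cop: "cop (v i j) = (\<Sum>k\<in>UNIV. tens (v i k) (v k j))" and v_cou: "cou (v i j) = (if i = j then 1 else 0)"
  using v unfolding corep_def by auto

lemma v_cop_nth: "cop (v i j) $ (p, q) = (\<Sum>k\<in>UNIV. v i k $ p * v k j $ q)"
  by (simp add: v_cop sum_component tens_def)

lemma clin_fun_rho: "clin_fun (\<lambda>x. \<rho> x $ a $ b)"
  unfolding clin_fun_def by (simp add: rho_add rho_smult)

lemma clin_map_comp: "clin_fun f \<Longrightarrow> clin_map g \<Longrightarrow> clin_fun (\<lambda>x. f (g x))"
  unfolding clin_fun_def clin_map_def by simp

lemma clin_map_nth: "clin_map g \<Longrightarrow> clin_fun (\<lambda>x. g x $ p)"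
  unfolding clin_fun_def clin_map_def by simp

lemma clin_fun_mul_l: "clin_fun f \<Longrightarrow> clin_fun (\<lambda>u. f (mul x u))"
  using clin_map_comp mul_l by blast
lemma clin_fun_mul_r: "clin_fun f \<Longrightarrow> clin_fun (\<lambda>u. f (mul u y))"
  using clin_map_comp[OF _ mul_r] by blast

lemma mul_exp_l: "clin_fun f \<Longrightarrow> (\<Sum>i\<in>UNIV. x $ i * f (mul (ebas i) y)) = f (mul x y)"
  using lin_expand[OF clin_fun_mul_r[of f y], of x] by simp
lemma mul_exp_r: "clin_fun f \<Longrightarrow> (\<Sum>i\<in>UNIV. y $ i * f (mul x (ebas i))) = f (mul x y)"
  using lin_expand[OF clin_fun_mul_l[of f x], of y] by simp
lemma fun_exp: "clin_fun f \<Longrightarrow> (\<Sum>i\<in>UNIV. x $ i * f (ebas i)) = f x"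
  using lin_expand by metis

lemma clin_fun_id_nth: "clin_fun (\<lambda>x. x $ p)"
  unfolding clin_fun_def by simp

end

context wh begin

abbreviation "one1 \<equiv> (vec_lambda (\<lambda>(p, q, r). one $ p * cop one $ (q, r)) :: complex ^ ('b \<times> 'b \<times> 'b))"
abbreviation "one2 \<equiv> (vec_lambda (\<lambda>(p, q, r). cop one $ (p, q) * one $ r) :: complex ^ ('b \<times> 'b \<times> 'b))"

lemma one_exp_l: "(\<Sum>i\<in>UNIV. one $ i * mul (ebas i) y $ p) = y $ p"
  using mul_exp_l[OF clin_fun_id_nth, of one y] by (simp add: one_l)
lemma one_exp_r: "(\<Sum>i\<in>UNIV. one $ i * mul y (ebas i) $ p) = y $ p"
  using mul_exp_r[OF clin_fun_id_nth, of one y] by (simp add: one_r)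

lemma mult_ite1: "(x::'a::comm_semiring_1) * (if c then 1 else 0) = (if c then x else 0)" by simp
lemma sum_if_const: "(\<Sum>j\<in>A. if c then f j else 0) = (if c then sum f A else 0)" by simp

lemma delta2: fixes F :: "'k::finite \<Rightarrow> 'i::finite \<Rightarrow> 'j::finite \<Rightarrow> 'a::comm_semiring_1" shows "(\<Sum>k\<in>UNIV. \<Sum>i\<in>UNIV. \<Sum>j\<in>UNIV. F k i j * (if p = i then 1 else 0) * (if r = k then 1 else 0))
   = (\<Sum>j\<in>UNIV. F r p j :: 'a::comm_semiring_1)"
proof -
  have "\<And>k. (\<Sum>i\<in>UNIV. \<Sum>j\<in>UNIV. F k i j * (if p = i then 1 else 0) * (if r = k then 1 else 0)) =
     (if r = k then (\<Sum>j\<in>UNIV. F k p j) else 0)" by (simp add: mult_ite1 sum_if_const sum.delta sum.delta')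
  then show ?thesis by simp
qed

lemma mul3_12: "mul3 mul one1 one2 $ (p, q, r) =
   (\<Sum>j\<in>UNIV. \<Sum>j'\<in>UNIV. cop one $ (j, r) * cop one $ (p, j') * mul (ebas j) (ebas j') $ q)"
proof -
  have "mul3 mul one1 one2 $ (p, q, r) = (\<Sum>i\<in>UNIV. \<Sum>j\<in>UNIV. \<Sum>k\<in>UNIV. \<Sum>i'\<in>UNIV. \<Sum>j'\<in>UNIV. \<Sum>k'\<in>UNIV.
      one $ i * cop one $ (j, k) * (cop one $ (i', j') * one $ k') * mul (ebas i) (ebas i') $ p
        * mul (ebas j) (ebas j') $ q * mul (ebas k) (ebas k') $ r)"
    by (simp add: mul3_def)
  also have "\<dots> = (\<Sum>j\<in>UNIV. \<Sum>k\<in>UNIV. \<Sum>i'\<in>UNIV. \<Sum>j'\<in>UNIV. \<Sum>i\<in>UNIV. \<Sum>k'\<in>UNIV.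
      one $ i * cop one $ (j, k) * (cop one $ (i', j') * one $ k') * mul (ebas i) (ebas i') $ p
        * mul (ebas j) (ebas j') $ q * mul (ebas k) (ebas k') $ r)"
    apply (rule trans[OF sum.swap], rule sum.cong[OF refl])
    apply (rule trans[OF sum.swap], rule sum.cong[OF refl])
    apply (rule trans[OF sum.swap], rule sum.cong[OF refl])
    apply (rule trans[OF sum.swap], rule sum.cong[OF refl])
    by simp
  also have "\<dots> = (\<Sum>j\<in>UNIV. \<Sum>k\<in>UNIV. \<Sum>i'\<in>UNIV. \<Sum>j'\<in>UNIV.
      cop one $ (j, k) * cop one $ (i', j') * mul (ebas j) (ebas j') $ q *
      (\<Sum>i\<in>UNIV. one $ i * mul (ebas i) (ebas i') $ p) * (\<Sum>k'\<in>UNIV. one $ k' * mul (ebas k) (ebas k') $ r))"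
    by (simp add: sum_distrib_left sum_distrib_right mult_ac)
  also have "\<dots> = (\<Sum>j\<in>UNIV. \<Sum>k\<in>UNIV. \<Sum>i'\<in>UNIV. \<Sum>j'\<in>UNIV.
      cop one $ (j, k) * cop one $ (i', j') * mul (ebas j) (ebas j') $ q *
      (if p = i' then 1 else 0) * (if r = k then 1 else 0))"
    by (simp only: one_exp_l one_exp_r ebas_nth)

  also have "\<dots> = (\<Sum>j\<in>UNIV. \<Sum>j'\<in>UNIV. cop one $ (j, r) * cop one $ (p, j') * mul (ebas j) (ebas j') $ q)"
    by (simp only: delta2)
  finally show ?thesis .
qed


lemma delta2b: fixes F :: "'k::finite \<Rightarrow> 'i::finite \<Rightarrow> 'j::finite \<Rightarrow> 'l::finite \<Rightarrow> 'a::comm_semiring_1" shows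
  "(\<Sum>i\<in>UNIV. \<Sum>j\<in>UNIV. \<Sum>j'\<in>UNIV. \<Sum>k'\<in>UNIV. F i j j' k' * (if p = i then 1 else 0) * (if r = k' then 1 else 0))
   = (\<Sum>j\<in>UNIV. \<Sum>j'\<in>UNIV. F p j j' r)"
  by (simp add: mult_ite1 sum_if_const sum.delta sum.delta')

lemma mul3_21: "mul3 mul one2 one1 $ (p, q, r) =
   (\<Sum>j\<in>UNIV. \<Sum>j'\<in>UNIV. cop one $ (p, j) * cop one $ (j', r) * mul (ebas j) (ebas j') $ q)"
proof -
  have "mul3 mul one2 one1 $ (p, q, r) = (\<Sum>i\<in>UNIV. \<Sum>j\<in>UNIV. \<Sum>k\<in>UNIV. \<Sum>i'\<in>UNIV. \<Sum>j'\<in>UNIV. \<Sum>k'\<in>UNIV.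
      cop one $ (i, j) * one $ k * (one $ i' * cop one $ (j', k')) * mul (ebas i) (ebas i') $ p
        * mul (ebas j) (ebas j') $ q * mul (ebas k) (ebas k') $ r)"
    by (simp add: mul3_def)
  also have "\<dots> = (\<Sum>i\<in>UNIV. \<Sum>j\<in>UNIV. \<Sum>i'\<in>UNIV. \<Sum>j'\<in>UNIV. \<Sum>k'\<in>UNIV. \<Sum>k\<in>UNIV.
      cop one $ (i, j) * one $ k * (one $ i' * cop one $ (j', k')) * mul (ebas i) (ebas i') $ p
        * mul (ebas j) (ebas j') $ q * mul (ebas k) (ebas k') $ r)"
    apply (rule sum.cong[OF refl], rule sum.cong[OF refl])
    apply (rule trans[OF sum.swap], rule sum.cong[OF refl])
    apply (rule trans[OF sum.swap], rule sum.cong[OF refl])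
    apply (rule trans[OF sum.swap])
    by simp
  also have "\<dots> = (\<Sum>i\<in>UNIV. \<Sum>j\<in>UNIV. \<Sum>j'\<in>UNIV. \<Sum>k'\<in>UNIV. \<Sum>i'\<in>UNIV. \<Sum>k\<in>UNIV.
      cop one $ (i, j) * one $ k * (one $ i' * cop one $ (j', k')) * mul (ebas i) (ebas i') $ p
        * mul (ebas j) (ebas j') $ q * mul (ebas k) (ebas k') $ r)"
    apply (rule sum.cong[OF refl], rule sum.cong[OF refl])
    apply (rule trans[OF sum.swap], rule sum.cong[OF refl])
    apply (rule trans[OF sum.swap])
    by simp
  also have "\<dots> = (\<Sum>i\<in>UNIV. \<Sum>j\<in>UNIV. \<Sum>j'\<in>UNIV. \<Sum>k'\<in>UNIV.
      cop one $ (i, j) * cop one $ (j', k') * mul (ebas j) (ebas j') $ q *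
      (\<Sum>i'\<in>UNIV. one $ i' * mul (ebas i) (ebas i') $ p) * (\<Sum>k\<in>UNIV. one $ k * mul (ebas k) (ebas k') $ r))"
    by (simp add: sum_distrib_left sum_distrib_right mult_ac)
  also have "\<dots> = (\<Sum>i\<in>UNIV. \<Sum>j\<in>UNIV. \<Sum>j'\<in>UNIV. \<Sum>k'\<in>UNIV.
      cop one $ (i, j) * cop one $ (j', k') * mul (ebas j) (ebas j') $ q *
      (if p = i then 1 else 0) * (if r = k' then 1 else 0))"
    by (simp only: one_exp_l one_exp_r ebas_nth)
  also have "\<dots> = (\<Sum>j\<in>UNIV. \<Sum>j'\<in>UNIV. cop one $ (p, j) * cop one $ (j', r) * mul (ebas j) (ebas j') $ q)"
    by (simp only: delta2b)
  finally show ?thesis .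
qed

lemma K1: "(\<Sum>j\<in>UNIV. \<Sum>j'\<in>UNIV. cop one $ (j, r) * cop one $ (p, j') * mul (ebas j) (ebas j') $ q)
  = (\<Sum>j\<in>UNIV. \<Sum>j'\<in>UNIV. cop one $ (p, j) * cop one $ (j', r) * mul (ebas j) (ebas j') $ q)"
proof -
  have e: "mul3 mul one1 one2 = mul3 mul one2 one1" using D2 by simp
  show ?thesis using arg_cong[OF e, of "\<lambda>X. X $ (p,q,r)"] by (simp only: mul3_12 mul3_21)
qed

lemma copcop_one: "cop_right cop (cop one) $ (p, q, r) =
   (\<Sum>j\<in>UNIV. \<Sum>j'\<in>UNIV. cop one $ (j, r) * cop one $ (p, j') * mul (ebas j) (ebas j') $ q)"
  by (simp only: D2(1) mul3_12)

end

lemma vec_eqI': "(\<And>i. x $ i = y $ i) \<Longrightarrow> x = y" by (simp add: vec_eq_iff)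

lemma tens_nth[simp]: "tens u w $ (p, q) = u $ p * w $ q"
  by (simp add: tens_def)

lemma mult_if_r: "(x::'a::mult_zero) * (if c then y else z) = (if c then x * y else x * z)" by simp
lemma mult_if_l: "(if c then y else z) * (x::'a::mult_zero) = (if c then y * x else z * x)" by simp

lemma smult_sum_left: "(sum f A) *s (x :: complex ^ 'n) = (\<Sum>a\<in>A. f a *s x)"
  by (rule vec_eqI') (simp add: sum_component sum_distrib_right)

lemma smult_sum_right: "(c::complex) *s (sum f A) = (\<Sum>a\<in>A. c *s f a)"
  by (rule vec_eqI') (simp add: sum_component sum_distrib_left)

lemma mult_ite1': "(x::'a::comm_semiring_1) * (if c then 1 else 0) = (if c then x else 0)" by simp
lemma mult_ite2': "(if c then 1 else 0) * (x::'a::comm_semiring_1) = (if c then x else 0)" by simp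

lemma tens_sum_left: "tens (sum f A) w = (\<Sum>a\<in>A. tens (f a) w)"
  by (simp add: vec_eq_iff sum_component sum_distrib_right)
lemma tens_sum_right: "tens u (sum f A) = (\<Sum>a\<in>A. tens u (f a))"
  by (simp add: vec_eq_iff sum_component sum_distrib_left)
lemma tens_smult_left: "tens (c *s u) w = c *s tens u w"
  by (simp add: vec_eq_iff)
lemma tens_smult_right: "tens u (c *s w) = c *s tens u w"
  by (simp add: vec_eq_iff)

lemma delta_2: fixes f :: "'s::finite \<Rightarrow> 't::finite \<Rightarrow> 'a::comm_semiring_1"
  shows "(\<Sum>s\<in>UNIV. \<Sum>t\<in>UNIV. f s t * (if a = s then 1 else 0) * (if b = t then 1 else 0)) = f a b"
  by (simp add: mult_ite1' sum.delta')

lemma tens_expand: "X = (\<Sum>s\<in>UNIV. \<Sum>t\<in>UNIV. X $ (s, t) *s tens (ebas s) (ebas t))"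
  by (rule vec_eqI') (auto simp add: sum_component ebas_nth mult.assoc[symmetric] delta_2 simp del: mult.assoc)

context wh begin

lemma mul2_nth: "mul2 mul X Y $ (p, q) = (\<Sum>i\<in>UNIV. \<Sum>j\<in>UNIV. \<Sum>k\<in>UNIV. \<Sum>l\<in>UNIV.
      X $ (i, j) * Y $ (k, l) * mul (ebas i) (ebas k) $ p * mul (ebas j) (ebas l) $ q)"
  by (simp add: mul2_def)

lemma mul2_expand: "mul2 mul X Y = (\<Sum>i\<in>UNIV. \<Sum>j\<in>UNIV. \<Sum>k\<in>UNIV. \<Sum>l\<in>UNIV.
      (X $ (i, j) * Y $ (k, l)) *s tens (mul (ebas i) (ebas k)) (mul (ebas j) (ebas l)))"
  apply (rule vec_eqI')
  subgoal for pq by (cases pq) (simp add: mul2_nth sum_component mult.assoc)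
  done

lemma mul_vec_exp_l: "(\<Sum>i\<in>UNIV. x $ i *s mul (ebas i) y) = mul x y"
  by (simp add: vec_eq_iff sum_component mul_exp_l[OF clin_fun_id_nth])
lemma mul_vec_exp_r: "(\<Sum>i\<in>UNIV. y $ i *s mul x (ebas i)) = mul x y"
  by (simp add: vec_eq_iff sum_component mul_exp_r[OF clin_fun_id_nth])

lemma mul2_tens: "mul2 mul (tens a b) (tens c d) = tens (mul a c) (mul b d)"
proof -
  have "tens (mul a c) (mul b d) = tens (\<Sum>i\<in>UNIV. a $ i *s mul (ebas i) c) (\<Sum>j\<in>UNIV. b $ j *s mul (ebas j) d)"
    by (simp add: mul_vec_exp_l)
  also have "\<dots> = tens (\<Sum>i\<in>UNIV. \<Sum>k\<in>UNIV. (a $ i * c $ k) *s mul (ebas i) (ebas k))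
                       (\<Sum>j\<in>UNIV. \<Sum>l\<in>UNIV. (b $ j * d $ l) *s mul (ebas j) (ebas l))"
  proof -
    have "\<And>i. mul (ebas i) c = (\<Sum>k\<in>UNIV. c $ k *s mul (ebas i) (ebas k))"
      "\<And>j. mul (ebas j) d = (\<Sum>l\<in>UNIV. d $ l *s mul (ebas j) (ebas l))"
      by (simp_all only: mul_vec_exp_r)
    then show ?thesis by (simp add: smult_sum_right vector_smult_assoc)
  qed
  also have "\<dots> = (\<Sum>i\<in>UNIV. \<Sum>k\<in>UNIV. \<Sum>j\<in>UNIV. \<Sum>l\<in>UNIV.
      (a $ i * c $ k * (b $ j * d $ l)) *s tens (mul (ebas i) (ebas k)) (mul (ebas j) (ebas l)))"
    by (simp only: tens_sum_left tens_smult_left, simp only: tens_sum_right tens_smult_right smult_sum_right vector_smult_assoc)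
  also have "\<dots> = (\<Sum>i\<in>UNIV. \<Sum>j\<in>UNIV. \<Sum>k\<in>UNIV. \<Sum>l\<in>UNIV.
      (a $ i * b $ j * (c $ k * d $ l)) *s tens (mul (ebas i) (ebas k)) (mul (ebas j) (ebas l)))"
    apply (rule sum.cong[OF refl])
    apply (rule trans[OF sum.swap])
    by (simp add: mult_ac)
  also have "\<dots> = mul2 mul (tens a b) (tens c d)"
    by (simp add: mul2_expand)
  finally show ?thesis by simp
qed

lemma mul2_add_left: "mul2 mul (X + X') Y = mul2 mul X Y + mul2 mul X' Y"
  by (simp only: mul2_expand vector_add_component distrib_right vector_sadd_rdistrib sum.distrib)
lemma mul2_add_right: "mul2 mul Y (X + X') = mul2 mul Y X + mul2 mul Y X'"
  by (simp only: mul2_expand vector_add_component distrib_left vector_sadd_rdistrib sum.distrib)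
lemma mul2_zero_left: "mul2 mul 0 Y = 0"
  by (simp add: mul2_expand)
lemma mul2_zero_right: "mul2 mul Y 0 = 0"
  by (simp add: mul2_expand)
lemma mul2_sum_left: "mul2 mul (\<Sum>n\<in>A. X n) Y = (\<Sum>n\<in>A. mul2 mul (X n) Y)"
  by (induction A rule: infinite_finite_induct) (simp_all add: mul2_zero_left mul2_add_left)
lemma mul2_sum_right: "mul2 mul Y (\<Sum>n\<in>A. X n) = (\<Sum>n\<in>A. mul2 mul Y (X n))"
  by (induction A rule: infinite_finite_induct) (simp_all add: mul2_zero_right mul2_add_right)
lemma mul2_smult_left: "mul2 mul (c *s X) Y = c *s mul2 mul X Y"
  by (simp only: mul2_expand smult_sum_right vector_smult_assoc vector_smult_component mult.assoc)
lemma mul2_smult_right: "mul2 mul X (c *s Y) = c *s mul2 mul X Y"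
  by (simp only: mul2_expand smult_sum_right vector_smult_assoc vector_smult_component mult.left_commute)

end

definition ev2 :: "complex ^ ('b::finite \<times> 'b) \<Rightarrow> (complex ^ 'b \<Rightarrow> complex) \<Rightarrow> (complex ^ 'b \<Rightarrow> complex) \<Rightarrow> complex" where
  "ev2 X f g = (\<Sum>k\<in>UNIV. \<Sum>l\<in>UNIV. X $ (k, l) * f (ebas k) * g (ebas l))"

lemma ev2_add: "ev2 (X + Y) f g = ev2 X f g + ev2 Y f g"
  by (simp add: ev2_def distrib_right sum.distrib)
lemma ev2_zero: "ev2 0 f g = 0"
  by (simp add: ev2_def)
lemma ev2_sum: "ev2 (\<Sum>n\<in>A. X n) f g = (\<Sum>n\<in>A. ev2 (X n) f g)"
  by (induction A rule: infinite_finite_induct) (simp_all add: ev2_zero ev2_add)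
lemma ev2_smult: "ev2 (c *s X) f g = c * ev2 X f g"
  by (simp add: ev2_def sum_distrib_left mult.assoc)
lemma ev2_tens: "clin_fun f \<Longrightarrow> clin_fun g \<Longrightarrow> ev2 (tens u w) f g = f u * g w"
proof -
  assume f: "clin_fun f" and g: "clin_fun g"
  have "ev2 (tens u w) f g = (\<Sum>k\<in>UNIV. \<Sum>l\<in>UNIV. (u $ k * f (ebas k)) * (w $ l * g (ebas l)))"
    by (simp add: ev2_def mult_ac)
  also have "\<dots> = (\<Sum>k\<in>UNIV. u $ k * f (ebas k)) * (\<Sum>l\<in>UNIV. w $ l * g (ebas l))"
    by (simp add: sum_product)
  also have "\<dots> = f u * g w" using lin_expand[OF f, of u] lin_expand[OF g, of w] by simp
  finally show ?thesis .
qed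

lemma ev2_nth: "ev2 X (\<lambda>x. x $ s) (\<lambda>x. x $ t) = X $ (s, t)"
  by (simp add: ev2_def ebas_nth mult_if_r sum.delta sum.delta' cong: if_cong)

context wh begin

lemma ev2_mul2: "clin_fun f \<Longrightarrow> clin_fun g \<Longrightarrow> ev2 (mul2 mul X Y) f g =
   (\<Sum>i\<in>UNIV. \<Sum>j\<in>UNIV. \<Sum>k\<in>UNIV. \<Sum>l\<in>UNIV.
      X $ (i, j) * Y $ (k, l) * f (mul (ebas i) (ebas k)) * g (mul (ebas j) (ebas l)))"
  by (simp add: mul2_expand ev2_sum ev2_smult ev2_tens mult.assoc)

definition et :: "complex ^ 'b \<Rightarrow> complex ^ 'b" where
  "et x = (\<Sum>p\<in>UNIV. \<Sum>q\<in>UNIV. (cop one $ (p, q) * cou (mul (ebas p) x)) *s ebas q)"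
definition es :: "complex ^ 'b \<Rightarrow> complex ^ 'b" where
  "es x = (\<Sum>p\<in>UNIV. \<Sum>q\<in>UNIV. (cop one $ (p, q) * cou (mul x (ebas q))) *s ebas p)"

lemma et_nth: "et x $ t = (\<Sum>p\<in>UNIV. cop one $ (p, t) * cou (mul (ebas p) x))"
  by (simp add: et_def sum_component ebas_nth mult_if_r sum.delta sum.delta' cong: if_cong)
lemma es_nth: "es x $ s = (\<Sum>q\<in>UNIV. cop one $ (s, q) * cou (mul x (ebas q)))"
  apply (simp add: es_def sum_component ebas_nth mult_if_r cong: if_cong)
  apply (subst sum.swap) by (simp add: sum.delta sum.delta')

end

context wh begin

lemma cou_exp: "(\<Sum>k\<in>UNIV. y $ k * cou (ebas k)) = cou y"
  using fun_exp[OF cou_lin] .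

lemma c1: "mul (ebas p) x $ s = (\<Sum>a\<in>UNIV. \<Sum>b\<in>UNIV. \<Sum>c\<in>UNIV. \<Sum>d\<in>UNIV.
    cop (ebas p) $ (a, b) * cop x $ (c, d) * mul (ebas a) (ebas c) $ s * cou (mul (ebas b) (ebas d)))"
proof -
  have "mul (ebas p) x $ s = (\<Sum>k\<in>UNIV. cop (mul (ebas p) x) $ (s, k) * cou (ebas k))"
    by (simp add: counit2)
  also have "\<dots> = (\<Sum>k\<in>UNIV. \<Sum>a\<in>UNIV. \<Sum>b\<in>UNIV. \<Sum>c\<in>UNIV. \<Sum>d\<in>UNIV.
    cop (ebas p) $ (a, b) * cop x $ (c, d) * mul (ebas a) (ebas c) $ s * (mul (ebas b) (ebas d) $ k * cou (ebas k)))"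
    by (simp add: cop_mul mul2_nth sum_distrib_right sum_distrib_left mult_ac)
  also have "\<dots> = (\<Sum>a\<in>UNIV. \<Sum>b\<in>UNIV. \<Sum>c\<in>UNIV. \<Sum>d\<in>UNIV. \<Sum>k\<in>UNIV.
    cop (ebas p) $ (a, b) * cop x $ (c, d) * mul (ebas a) (ebas c) $ s * (mul (ebas b) (ebas d) $ k * cou (ebas k)))"
    apply (rule trans[OF sum.swap], rule sum.cong[OF refl])
    apply (rule trans[OF sum.swap], rule sum.cong[OF refl])
    apply (rule trans[OF sum.swap], rule sum.cong[OF refl])
    apply (rule trans[OF sum.swap])
    by simp
  also have "\<dots> = (\<Sum>a\<in>UNIV. \<Sum>b\<in>UNIV. \<Sum>c\<in>UNIV. \<Sum>d\<in>UNIV.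
    cop (ebas p) $ (a, b) * cop x $ (c, d) * mul (ebas a) (ebas c) $ s * cou (mul (ebas b) (ebas d)))"
    by (simp only: sum_distrib_left[symmetric] cou_exp)
  finally show ?thesis .
qed

lemma c2: "(\<Sum>p\<in>UNIV. cop one $ (p, t) * cop (ebas p) $ (a, b)) =
   (\<Sum>j\<in>UNIV. \<Sum>j'\<in>UNIV. cop one $ (j, t) * cop one $ (a, j') * mul (ebas j) (ebas j') $ b)"
proof -
  have "(\<Sum>p\<in>UNIV. cop one $ (p, t) * cop (ebas p) $ (a, b)) = cop_left cop (cop one) $ (a, b, t)"
    by (simp add: cop_left_def mult_ac)
  also have "\<dots> = cop_right cop (cop one) $ (a, b, t)" by (simp add: coassoc)
  finally show ?thesis by (simp add: copcop_one)
qed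


lemma ev2_cop_nth: "ev2 (cop x) (\<lambda>u. u $ s) g = (\<Sum>l\<in>UNIV. cop x $ (s, l) * g (ebas l))"
  by (simp add: ev2_def ebas_nth mult_if_r mult_if_l sum_if_const sum.delta sum.delta' cong: if_cong)

lemma F1_comp: "(\<Sum>b\<in>UNIV. cop x $ (s, b) * et (ebas b) $ t) = (\<Sum>p\<in>UNIV. cop one $ (p, t) * mul (ebas p) x $ s)"
proof -
  have "(\<Sum>p\<in>UNIV. cop one $ (p, t) * mul (ebas p) x $ s) = (\<Sum>p\<in>UNIV. \<Sum>a\<in>UNIV. \<Sum>b\<in>UNIV. \<Sum>c\<in>UNIV. \<Sum>d\<in>UNIV.
      cop one $ (p, t) * cop (ebas p) $ (a, b) * (cop x $ (c, d) * mul (ebas a) (ebas c) $ s * cou (mul (ebas b) (ebas d))))"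
    by (subst c1, simp add: sum_distrib_left mult_ac)
  also have "\<dots> = (\<Sum>a\<in>UNIV. \<Sum>b\<in>UNIV. \<Sum>c\<in>UNIV. \<Sum>d\<in>UNIV. \<Sum>p\<in>UNIV.
      cop one $ (p, t) * cop (ebas p) $ (a, b) * (cop x $ (c, d) * mul (ebas a) (ebas c) $ s * cou (mul (ebas b) (ebas d))))"
    apply (rule trans[OF sum.swap], rule sum.cong[OF refl])
    apply (rule trans[OF sum.swap], rule sum.cong[OF refl])
    apply (rule trans[OF sum.swap], rule sum.cong[OF refl])
    apply (rule trans[OF sum.swap])
    by simp
  also have "\<dots> = (\<Sum>a\<in>UNIV. \<Sum>b\<in>UNIV. \<Sum>c\<in>UNIV. \<Sum>d\<in>UNIV. \<Sum>j\<in>UNIV. \<Sum>j'\<in>UNIV.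
      cop one $ (j, t) * cop one $ (a, j') * mul (ebas j) (ebas j') $ b *
      (cop x $ (c, d) * mul (ebas a) (ebas c) $ s * cou (mul (ebas b) (ebas d))))"
    by (simp only: sum_distrib_right[symmetric] c2)
  also have "\<dots> = (\<Sum>a\<in>UNIV. \<Sum>c\<in>UNIV. \<Sum>d\<in>UNIV. \<Sum>j\<in>UNIV. \<Sum>j'\<in>UNIV. \<Sum>b\<in>UNIV.
      cop one $ (j, t) * cop one $ (a, j') * mul (ebas j) (ebas j') $ b *
      (cop x $ (c, d) * mul (ebas a) (ebas c) $ s * cou (mul (ebas b) (ebas d))))"
    apply (rule sum.cong[OF refl])
    apply (rule trans[OF sum.swap], rule sum.cong[OF refl])
    apply (rule trans[OF sum.swap], rule sum.cong[OF refl])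
    apply (rule trans[OF sum.swap], rule sum.cong[OF refl])
    apply (rule trans[OF sum.swap])
    by simp
  also have "\<dots> = (\<Sum>a\<in>UNIV. \<Sum>c\<in>UNIV. \<Sum>d\<in>UNIV. \<Sum>j\<in>UNIV. \<Sum>j'\<in>UNIV.
      cop one $ (j, t) * cop one $ (a, j') * cop x $ (c, d) * mul (ebas a) (ebas c) $ s *
      (\<Sum>b\<in>UNIV. mul (ebas j) (ebas j') $ b * cou (mul (ebas b) (ebas d))))"
    by (simp add: sum_distrib_left mult_ac)
  also have "\<dots> = (\<Sum>a\<in>UNIV. \<Sum>c\<in>UNIV. \<Sum>d\<in>UNIV. \<Sum>j\<in>UNIV. \<Sum>j'\<in>UNIV.
      cop one $ (j, t) * cop one $ (a, j') * cop x $ (c, d) * mul (ebas a) (ebas c) $ s *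
      cou (mul (ebas j) (mul (ebas j') (ebas d))))"
    by (simp only: mul_exp_l[OF cou_lin] assoc)
  also have "\<dots> = (\<Sum>a\<in>UNIV. \<Sum>d\<in>UNIV. \<Sum>j\<in>UNIV. \<Sum>j'\<in>UNIV. \<Sum>c\<in>UNIV.
      cop one $ (j, t) * cop one $ (a, j') * cop x $ (c, d) * mul (ebas a) (ebas c) $ s *
      cou (mul (ebas j) (mul (ebas j') (ebas d))))"
    apply (rule sum.cong[OF refl])
    apply (rule trans[OF sum.swap], rule sum.cong[OF refl])
    apply (rule trans[OF sum.swap], rule sum.cong[OF refl])
    apply (rule trans[OF sum.swap])
    by simp
  also have "\<dots> = (\<Sum>a\<in>UNIV. \<Sum>j\<in>UNIV. \<Sum>j'\<in>UNIV. \<Sum>c\<in>UNIV. \<Sum>d\<in>UNIV.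
      cop one $ (j, t) * cop one $ (a, j') * cop x $ (c, d) * mul (ebas a) (ebas c) $ s *
      cou (mul (ebas j) (mul (ebas j') (ebas d))))"
    apply (rule sum.cong[OF refl])
    apply (rule trans[OF sum.swap], rule sum.cong[OF refl])
    apply (rule trans[OF sum.swap], rule sum.cong[OF refl])
    apply (rule trans[OF sum.swap])
    by simp
  also have "\<dots> = (\<Sum>j\<in>UNIV. cop one $ (j, t) * (\<Sum>a\<in>UNIV. \<Sum>j'\<in>UNIV. \<Sum>c\<in>UNIV. \<Sum>d\<in>UNIV.
      cop one $ (a, j') * cop x $ (c, d) * mul (ebas a) (ebas c) $ s *
      cou (mul (ebas j) (mul (ebas j') (ebas d)))))"
    apply (rule trans[OF sum.swap])
    by (simp add: sum_distrib_left mult_ac)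
  also have "\<dots> = (\<Sum>j\<in>UNIV. cop one $ (j, t) * ev2 (mul2 mul (cop one) (cop x)) (\<lambda>u. u $ s) (\<lambda>u. cou (mul (ebas j) u)))"
    by (simp add: ev2_mul2 clin_fun_id_nth clin_fun_mul_l cou_lin)
  also have "\<dots> = (\<Sum>j\<in>UNIV. cop one $ (j, t) * (\<Sum>l\<in>UNIV. cop x $ (s, l) * cou (mul (ebas j) (ebas l))))"
    by (simp add: cop_mul[symmetric] one_l ev2_cop_nth)
  also have "\<dots> = (\<Sum>b\<in>UNIV. cop x $ (s, b) * et (ebas b) $ t)"
    apply (simp add: et_nth sum_distrib_left sum_distrib_right mult_ac)
    by (rule sum.swap)
  finally show ?thesis by simp
qed


lemma ev2_cop_nth2: "ev2 (cop x) f (\<lambda>u. u $ t) = (\<Sum>k\<in>UNIV. cop x $ (k, t) * f (ebas k))"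
  by (simp add: ev2_def ebas_nth mult_if_r mult_if_l sum_if_const sum.delta sum.delta' mult.commute cong: if_cong)

lemma c1': "mul x (ebas q) $ t = (\<Sum>a\<in>UNIV. \<Sum>b\<in>UNIV. \<Sum>c\<in>UNIV. \<Sum>d\<in>UNIV.
    cop x $ (a, b) * cop (ebas q) $ (c, d) * cou (mul (ebas a) (ebas c)) * mul (ebas b) (ebas d) $ t)"
proof -
  have "mul x (ebas q) $ t = (\<Sum>k\<in>UNIV. cop (mul x (ebas q)) $ (k, t) * cou (ebas k))"
    by (simp add: counit1)
  also have "\<dots> = (\<Sum>k\<in>UNIV. \<Sum>a\<in>UNIV. \<Sum>b\<in>UNIV. \<Sum>c\<in>UNIV. \<Sum>d\<in>UNIV.
    cop x $ (a, b) * cop (ebas q) $ (c, d) * mul (ebas b) (ebas d) $ t * (mul (ebas a) (ebas c) $ k * cou (ebas k)))"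
    by (simp add: cop_mul mul2_nth sum_distrib_right sum_distrib_left mult_ac)
  also have "\<dots> = (\<Sum>a\<in>UNIV. \<Sum>b\<in>UNIV. \<Sum>c\<in>UNIV. \<Sum>d\<in>UNIV. \<Sum>k\<in>UNIV.
    cop x $ (a, b) * cop (ebas q) $ (c, d) * mul (ebas b) (ebas d) $ t * (mul (ebas a) (ebas c) $ k * cou (ebas k)))"
    apply (rule trans[OF sum.swap], rule sum.cong[OF refl])
    apply (rule trans[OF sum.swap], rule sum.cong[OF refl])
    apply (rule trans[OF sum.swap], rule sum.cong[OF refl])
    apply (rule trans[OF sum.swap])
    by simp
  also have "\<dots> = (\<Sum>a\<in>UNIV. \<Sum>b\<in>UNIV. \<Sum>c\<in>UNIV. \<Sum>d\<in>UNIV.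
    cop x $ (a, b) * cop (ebas q) $ (c, d) * mul (ebas b) (ebas d) $ t * cou (mul (ebas a) (ebas c)))"
    by (simp only: sum_distrib_left[symmetric] cou_exp)
  finally show ?thesis by (simp add: mult_ac)
qed

lemma c2': "(\<Sum>q\<in>UNIV. cop one $ (s, q) * cop (ebas q) $ (c, d)) =
   (\<Sum>j\<in>UNIV. \<Sum>j'\<in>UNIV. cop one $ (j, d) * cop one $ (s, j') * mul (ebas j) (ebas j') $ c)"
proof -
  have "(\<Sum>q\<in>UNIV. cop one $ (s, q) * cop (ebas q) $ (c, d)) = cop_right cop (cop one) $ (s, c, d)"
    by (simp add: cop_right_def)
  then show ?thesis by (simp add: copcop_one)
qed

lemma F2_comp: "(\<Sum>a\<in>UNIV. cop x $ (a, t) * es (ebas a) $ s) = (\<Sum>q\<in>UNIV. cop one $ (s, q) * mul x (ebas q) $ t)"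
proof -
  have "(\<Sum>q\<in>UNIV. cop one $ (s, q) * mul x (ebas q) $ t) = (\<Sum>q\<in>UNIV. \<Sum>a\<in>UNIV. \<Sum>b\<in>UNIV. \<Sum>c\<in>UNIV. \<Sum>d\<in>UNIV.
      cop one $ (s, q) * cop (ebas q) $ (c, d) * (cop x $ (a, b) * cou (mul (ebas a) (ebas c)) * mul (ebas b) (ebas d) $ t))"
    by (subst c1', simp add: sum_distrib_left mult_ac)
  also have "\<dots> = (\<Sum>a\<in>UNIV. \<Sum>b\<in>UNIV. \<Sum>c\<in>UNIV. \<Sum>d\<in>UNIV. \<Sum>q\<in>UNIV.
      cop one $ (s, q) * cop (ebas q) $ (c, d) * (cop x $ (a, b) * cou (mul (ebas a) (ebas c)) * mul (ebas b) (ebas d) $ t))"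
    apply (rule trans[OF sum.swap], rule sum.cong[OF refl])
    apply (rule trans[OF sum.swap], rule sum.cong[OF refl])
    apply (rule trans[OF sum.swap], rule sum.cong[OF refl])
    apply (rule trans[OF sum.swap])
    by simp
  also have "\<dots> = (\<Sum>a\<in>UNIV. \<Sum>b\<in>UNIV. \<Sum>c\<in>UNIV. \<Sum>d\<in>UNIV. \<Sum>j\<in>UNIV. \<Sum>j'\<in>UNIV.
      cop one $ (j, d) * cop one $ (s, j') * mul (ebas j) (ebas j') $ c *
      (cop x $ (a, b) * cou (mul (ebas a) (ebas c)) * mul (ebas b) (ebas d) $ t))"
    by (simp only: sum_distrib_right[symmetric] c2')
  also have "\<dots> = (\<Sum>a\<in>UNIV. \<Sum>b\<in>UNIV. \<Sum>d\<in>UNIV. \<Sum>j\<in>UNIV. \<Sum>j'\<in>UNIV. \<Sum>c\<in>UNIV.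
      cop one $ (j, d) * cop one $ (s, j') * mul (ebas j) (ebas j') $ c *
      (cop x $ (a, b) * cou (mul (ebas a) (ebas c)) * mul (ebas b) (ebas d) $ t))"
    apply (rule sum.cong[OF refl], rule sum.cong[OF refl])
    apply (rule trans[OF sum.swap], rule sum.cong[OF refl])
    apply (rule trans[OF sum.swap], rule sum.cong[OF refl])
    apply (rule trans[OF sum.swap])
    by simp
  also have "\<dots> = (\<Sum>a\<in>UNIV. \<Sum>b\<in>UNIV. \<Sum>d\<in>UNIV. \<Sum>j\<in>UNIV. \<Sum>j'\<in>UNIV.
      cop one $ (j, d) * cop one $ (s, j') * cop x $ (a, b) * mul (ebas b) (ebas d) $ t *
      (\<Sum>c\<in>UNIV. mul (ebas j) (ebas j') $ c * cou (mul (ebas a) (ebas c))))"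
    by (simp add: sum_distrib_left mult_ac)
  also have "\<dots> = (\<Sum>a\<in>UNIV. \<Sum>b\<in>UNIV. \<Sum>d\<in>UNIV. \<Sum>j\<in>UNIV. \<Sum>j'\<in>UNIV.
      cop one $ (j, d) * cop one $ (s, j') * cop x $ (a, b) * mul (ebas b) (ebas d) $ t *
      cou (mul (mul (ebas a) (ebas j)) (ebas j')))"
    by (simp only: mul_exp_r[OF cou_lin] assoc)
  also have "\<dots> = (\<Sum>a\<in>UNIV. \<Sum>b\<in>UNIV. \<Sum>j\<in>UNIV. \<Sum>d\<in>UNIV. \<Sum>j'\<in>UNIV.
      cop one $ (j, d) * cop one $ (s, j') * cop x $ (a, b) * mul (ebas b) (ebas d) $ t *
      cou (mul (mul (ebas a) (ebas j)) (ebas j')))"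
    apply (rule sum.cong[OF refl], rule sum.cong[OF refl])
    apply (rule trans[OF sum.swap])
    by simp
  also have "\<dots> = (\<Sum>j'\<in>UNIV. \<Sum>a\<in>UNIV. \<Sum>b\<in>UNIV. \<Sum>j\<in>UNIV. \<Sum>d\<in>UNIV.
      cop one $ (j, d) * cop one $ (s, j') * cop x $ (a, b) * mul (ebas b) (ebas d) $ t *
      cou (mul (mul (ebas a) (ebas j)) (ebas j')))"
    apply (rule sym)
    apply (rule trans[OF sum.swap], rule sum.cong[OF refl])
    apply (rule trans[OF sum.swap], rule sum.cong[OF refl])
    apply (rule trans[OF sum.swap], rule sum.cong[OF refl])
    apply (rule trans[OF sum.swap])
    by simp
  also have "\<dots> = (\<Sum>j'\<in>UNIV. cop one $ (s, j') * ev2 (mul2 mul (cop x) (cop one)) (\<lambda>u. cou (mul u (ebas j'))) (\<lambda>u. u $ t))"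
    by (simp add: ev2_mul2 clin_fun_id_nth clin_fun_mul_r cou_lin sum_distrib_left mult_ac)
  also have "\<dots> = (\<Sum>j'\<in>UNIV. cop one $ (s, j') * (\<Sum>k\<in>UNIV. cop x $ (k, t) * cou (mul (ebas k) (ebas j'))))"
    by (simp add: cop_mul[symmetric] one_r ev2_cop_nth2)
  also have "\<dots> = (\<Sum>a\<in>UNIV. cop x $ (a, t) * es (ebas a) $ s)"
    apply (simp add: es_nth sum_distrib_left sum_distrib_right mult_ac)
    by (rule sum.swap)
  finally show ?thesis by simp
qed

end

context wh begin

lemma et_lin_nth: "et x $ t = (\<Sum>b\<in>UNIV. x $ b * et (ebas b) $ t)"
proof -
  have "et x $ t = (\<Sum>p\<in>UNIV. \<Sum>b\<in>UNIV. cop one $ (p, t) * (x $ b * cou (mul (ebas p) (ebas b))))"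
  proof -
    have "\<And>p. cou (mul (ebas p) x) = (\<Sum>b\<in>UNIV. x $ b * cou (mul (ebas p) (ebas b)))"
      by (simp only: mul_exp_r[OF cou_lin])
    then show ?thesis by (simp add: et_nth sum_distrib_left)
  qed
  also have "\<dots> = (\<Sum>b\<in>UNIV. x $ b * et (ebas b) $ t)"
    by (subst sum.swap) (simp add: et_nth sum_distrib_left mult_ac)
  finally show ?thesis .
qed

lemma es_lin_nth: "es x $ s = (\<Sum>b\<in>UNIV. x $ b * es (ebas b) $ s)"
proof -
  have "es x $ s = (\<Sum>q\<in>UNIV. \<Sum>b\<in>UNIV. cop one $ (s, q) * (x $ b * cou (mul (ebas b) (ebas q))))"
  proof -
    have "\<And>q. cou (mul x (ebas q)) = (\<Sum>b\<in>UNIV. x $ b * cou (mul (ebas b) (ebas q)))"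
      by (simp only: mul_exp_l[OF cou_lin])
    then show ?thesis by (simp add: es_nth sum_distrib_left)
  qed
  also have "\<dots> = (\<Sum>b\<in>UNIV. x $ b * es (ebas b) $ s)"
    by (subst sum.swap) (simp add: es_nth sum_distrib_left mult_ac)
  finally show ?thesis .
qed

lemma mul2_D_tens: "mul2 mul (cop one) (tens x one) = (\<Sum>p\<in>UNIV. \<Sum>q\<in>UNIV. cop one $ (p, q) *s tens (mul (ebas p) x) (ebas q))"
  apply (subst tens_expand[of "cop one"])
  by (simp add: mul2_sum_left mul2_smult_left mul2_tens one_r)

lemma tens_mul2_D: "mul2 mul (tens one y) (cop one) = (\<Sum>p\<in>UNIV. \<Sum>q\<in>UNIV. cop one $ (p, q) *s tens (ebas p) (mul y (ebas q)))"
  apply (subst tens_expand[of "cop one"])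
  by (simp add: mul2_sum_right mul2_smult_right mul2_tens one_l)

lemma F1_tens: "(\<Sum>k\<in>UNIV. tens (v i k) (et (v k j))) = mul2 mul (cop one) (tens (v i j) one)"
proof (rule vec_eqI')
  fix st :: "'b \<times> 'b"
  obtain s t where st: "st = (s, t)" by (cases st)
  have "(\<Sum>k\<in>UNIV. tens (v i k) (et (v k j))) $ (s, t) = (\<Sum>k\<in>UNIV. \<Sum>b\<in>UNIV. v i k $ s * (v k j $ b * et (ebas b) $ t))"
    by (simp add: sum_component et_lin_nth[of "v _ j"] sum_distrib_left)
  also have "\<dots> = (\<Sum>b\<in>UNIV. cop (v i j) $ (s, b) * et (ebas b) $ t)"
    by (subst sum.swap) (simp add: v_cop_nth sum_distrib_right sum_distrib_left mult_ac)
  also have "\<dots> = (\<Sum>p\<in>UNIV. cop one $ (p, t) * mul (ebas p) (v i j) $ s)"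
    by (rule F1_comp)
  also have "\<dots> = mul2 mul (cop one) (tens (v i j) one) $ (s, t)"
    by (simp add: mul2_D_tens sum_component ebas_nth mult_if_r mult_if_l sum_if_const sum.delta sum.delta' mult_ac cong: if_cong)
  finally show "(\<Sum>k\<in>UNIV. tens (v i k) (et (v k j))) $ st = mul2 mul (cop one) (tens (v i j) one) $ st"
    using st by simp
qed

lemma F2_tens: "(\<Sum>k\<in>UNIV. tens (es (v i k)) (v k j)) = mul2 mul (tens one (v i j)) (cop one)"
proof (rule vec_eqI')
  fix st :: "'b \<times> 'b"
  obtain s t where st: "st = (s, t)" by (cases st)
  have "(\<Sum>k\<in>UNIV. tens (es (v i k)) (v k j)) $ (s, t) = (\<Sum>k\<in>UNIV. \<Sum>a\<in>UNIV. v i k $ a * es (ebas a) $ s * v k j $ t)"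
    by (simp add: sum_component es_lin_nth[of "v i _"] sum_distrib_right)
  also have "\<dots> = (\<Sum>a\<in>UNIV. cop (v i j) $ (a, t) * es (ebas a) $ s)"
    by (subst sum.swap) (simp add: v_cop_nth sum_distrib_right sum_distrib_left mult_ac)
  also have "\<dots> = (\<Sum>q\<in>UNIV. cop one $ (s, q) * mul (v i j) (ebas q) $ t)"
    by (rule F2_comp)
  also have "\<dots> = mul2 mul (tens one (v i j)) (cop one) $ (s, t)"
    by (simp add: tens_mul2_D sum_component ebas_nth mult_if_r mult_if_l sum_if_const sum.delta sum.delta' mult_ac cong: if_cong)
  finally show "(\<Sum>k\<in>UNIV. tens (es (v i k)) (v k j)) $ st = mul2 mul (tens one (v i j)) (cop one) $ st"
    using st by simp
qed

lemma F3: "mul2 mul (cop one) (cop one) = cop one"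
  using cop_mul[of one one] one_l by simp

lemma mul2_assoc: "mul2 mul (mul2 mul X Y) Z = mul2 mul X (mul2 mul Y Z)"
  apply (subst (1 2) tens_expand[of X], subst (1 2) tens_expand[of Y], subst (1 2) tens_expand[of Z])
  by (simp only: mul2_sum_left mul2_sum_right mul2_smult_left mul2_smult_right mul2_tens assoc)

end

context wh begin

lemma G3: "(\<Sum>e\<in>UNIV. \<Sum>b\<in>UNIV. tens (mul (es (v i2 e)) (v i1 b)) (mul (v e j2) (et (v b j1))))
   = (\<Sum>b\<in>UNIV. tens (v i1 b) (mul (v i2 j2) (et (v b j1))))"
proof -
  have "(\<Sum>e\<in>UNIV. \<Sum>b\<in>UNIV. tens (mul (es (v i2 e)) (v i1 b)) (mul (v e j2) (et (v b j1))))
     = mul2 mul (\<Sum>e\<in>UNIV. tens (es (v i2 e)) (v e j2)) (\<Sum>b\<in>UNIV. tens (v i1 b) (et (v b j1)))"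
    apply (simp add: mul2_sum_left mul2_sum_right mul2_tens)
    by (rule sum.swap)
  also have "\<dots> = mul2 mul (mul2 mul (tens one (v i2 j2)) (cop one)) (mul2 mul (cop one) (tens (v i1 j1) one))"
    by (simp only: F1_tens F2_tens)
  also have "\<dots> = mul2 mul (tens one (v i2 j2)) (mul2 mul (cop one) (tens (v i1 j1) one))"
  proof -
    have "mul2 mul (cop one) (mul2 mul (cop one) (tens (v i1 j1) one)) = mul2 mul (cop one) (tens (v i1 j1) one)"
      by (simp only: mul2_assoc[symmetric] F3)
    then show ?thesis by (simp only: mul2_assoc)
  qed
  also have "\<dots> = mul2 mul (tens one (v i2 j2)) (\<Sum>b\<in>UNIV. tens (v i1 b) (et (v b j1)))"
    by (simp only: F1_tens)
  also have "\<dots> = (\<Sum>b\<in>UNIV. tens (v i1 b) (mul (v i2 j2) (et (v b j1))))"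
    by (simp add: mul2_sum_right mul2_tens one_l)
  finally show ?thesis .
qed

end

lemma sum_pull3: "(\<Sum>a\<in>A. \<Sum>b\<in>B. \<Sum>c\<in>C. f a b c) = (\<Sum>c\<in>C. \<Sum>a\<in>A. \<Sum>b\<in>B. f a b c)"
proof -
  have "(\<Sum>a\<in>A. \<Sum>b\<in>B. \<Sum>c\<in>C. f a b c) = (\<Sum>a\<in>A. \<Sum>c\<in>C. \<Sum>b\<in>B. f a b c)"
    by (rule sum.cong[OF refl], rule sum.swap)
  also have "\<dots> = (\<Sum>c\<in>C. \<Sum>a\<in>A. \<Sum>b\<in>B. f a b c)" by (rule sum.swap)
  finally show ?thesis .
qed

lemma sum_pull4: "(\<Sum>a\<in>A. \<Sum>b\<in>B. \<Sum>c\<in>C. \<Sum>d\<in>D. f a b c d) = (\<Sum>d\<in>D. \<Sum>a\<in>A. \<Sum>b\<in>B. \<Sum>c\<in>C. f a b c d)"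
proof -
  have "(\<Sum>a\<in>A. \<Sum>b\<in>B. \<Sum>c\<in>C. \<Sum>d\<in>D. f a b c d) = (\<Sum>a\<in>A. \<Sum>d\<in>D. \<Sum>b\<in>B. \<Sum>c\<in>C. f a b c d)"
    by (rule sum.cong[OF refl], rule sum_pull3)
  also have "\<dots> = (\<Sum>d\<in>D. \<Sum>a\<in>A. \<Sum>b\<in>B. \<Sum>c\<in>C. f a b c d)" by (rule sum.swap)
  finally show ?thesis .
qed

lemma sum_pull5: "(\<Sum>a\<in>A. \<Sum>b\<in>B. \<Sum>c\<in>C. \<Sum>d\<in>D. \<Sum>e\<in>E. f a b c d e) = (\<Sum>e\<in>E. \<Sum>a\<in>A. \<Sum>b\<in>B. \<Sum>c\<in>C. \<Sum>d\<in>D. f a b c d e)"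
proof -
  have "(\<Sum>a\<in>A. \<Sum>b\<in>B. \<Sum>c\<in>C. \<Sum>d\<in>D. \<Sum>e\<in>E. f a b c d e) = (\<Sum>a\<in>A. \<Sum>e\<in>E. \<Sum>b\<in>B. \<Sum>c\<in>C. \<Sum>d\<in>D. f a b c d e)"
    by (rule sum.cong[OF refl], rule sum_pull4)
  also have "\<dots> = (\<Sum>e\<in>E. \<Sum>a\<in>A. \<Sum>b\<in>B. \<Sum>c\<in>C. \<Sum>d\<in>D. f a b c d e)" by (rule sum.swap)
  finally show ?thesis .
qed

context wh begin

lemma mul_nth_exp: "mul a b $ r = (\<Sum>i\<in>UNIV. \<Sum>k\<in>UNIV. a $ i * b $ k * mul (ebas i) (ebas k) $ r)"
proof -
  have "mul a b $ r = (\<Sum>i\<in>UNIV. a $ i * mul (ebas i) b $ r)"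
    by (simp only: mul_exp_l[OF clin_fun_id_nth])
  also have "\<dots> = (\<Sum>i\<in>UNIV. a $ i * (\<Sum>k\<in>UNIV. b $ k * mul (ebas i) (ebas k) $ r))"
  proof -
    have "\<And>i. mul (ebas i) b $ r = (\<Sum>k\<in>UNIV. b $ k * mul (ebas i) (ebas k) $ r)"
      by (simp only: mul_exp_r[OF clin_fun_id_nth])
    then show ?thesis by simp
  qed
  finally show ?thesis by (simp add: sum_distrib_left mult_ac)
qed

lemma M1A: "mul (et x) (es y) = mul (es y) (et x)"
proof (rule vec_eqI')
  fix r
  have L: "mul (et x) (es y) $ r = (\<Sum>p\<in>UNIV. \<Sum>q'\<in>UNIV. cou (mul (ebas p) x) * cou (mul y (ebas q')) *
     (\<Sum>q\<in>UNIV. \<Sum>p'\<in>UNIV. cop one $ (p, q) * cop one $ (p', q') * mul (ebas q) (ebas p') $ r))"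
  proof -
    have "mul (et x) (es y) $ r = (\<Sum>q\<in>UNIV. \<Sum>p'\<in>UNIV. \<Sum>p\<in>UNIV. \<Sum>q'\<in>UNIV.
       cou (mul (ebas p) x) * cou (mul y (ebas q')) * (cop one $ (p, q) * cop one $ (p', q') * mul (ebas q) (ebas p') $ r))"
      by (subst mul_nth_exp, simp add: et_nth es_nth sum_distrib_left sum_distrib_right mult_ac)
    also have "\<dots> = (\<Sum>p\<in>UNIV. \<Sum>q'\<in>UNIV. \<Sum>q\<in>UNIV. \<Sum>p'\<in>UNIV.
       cou (mul (ebas p) x) * cou (mul y (ebas q')) * (cop one $ (p, q) * cop one $ (p', q') * mul (ebas q) (ebas p') $ r))"
      apply (rule trans[OF sum_pull3], rule sum.cong[OF refl])
      apply (rule trans[OF sum_pull3], rule sum.cong[OF refl])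
      by simp
    finally show ?thesis by (simp add: sum_distrib_left)
  qed
  have R: "mul (es y) (et x) $ r = (\<Sum>p\<in>UNIV. \<Sum>q'\<in>UNIV. cou (mul (ebas p) x) * cou (mul y (ebas q')) *
     (\<Sum>p'\<in>UNIV. \<Sum>q\<in>UNIV. cop one $ (p', q') * cop one $ (p, q) * mul (ebas p') (ebas q) $ r))"
  proof -
    have "mul (es y) (et x) $ r = (\<Sum>p'\<in>UNIV. \<Sum>q\<in>UNIV. \<Sum>p\<in>UNIV. \<Sum>q'\<in>UNIV.
       cou (mul (ebas p) x) * cou (mul y (ebas q')) * (cop one $ (p', q') * cop one $ (p, q) * mul (ebas p') (ebas q) $ r))"
      by (subst mul_nth_exp, simp add: et_nth es_nth sum_distrib_left sum_distrib_right mult_ac)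
    also have "\<dots> = (\<Sum>p\<in>UNIV. \<Sum>q'\<in>UNIV. \<Sum>p'\<in>UNIV. \<Sum>q\<in>UNIV.
       cou (mul (ebas p) x) * cou (mul y (ebas q')) * (cop one $ (p', q') * cop one $ (p, q) * mul (ebas p') (ebas q) $ r))"
      apply (rule trans[OF sum_pull3], rule sum.cong[OF refl])
      apply (rule trans[OF sum_pull3], rule sum.cong[OF refl])
      by simp
    finally show ?thesis by (simp add: sum_distrib_left)
  qed
  have K: "(\<Sum>q\<in>UNIV. \<Sum>p'\<in>UNIV. cop one $ (p, q) * cop one $ (p', q') * mul (ebas q) (ebas p') $ r)
      = (\<Sum>p'\<in>UNIV. \<Sum>q\<in>UNIV. cop one $ (p', q') * cop one $ (p, q) * mul (ebas p') (ebas q) $ r)" for p q'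
    by (rule K1[of q' p r, symmetric])
  show "mul (et x) (es y) $ r = mul (es y) (et x) $ r"
    by (simp only: L R K)
qed

end

context wh begin

lemma eps1v: "cou (mul (mul X (v i j)) Z) = (\<Sum>m\<in>UNIV. cou (mul X (v i m)) * cou (mul (v m j) Z))"
proof -
  have "cou (mul (mul X (v i j)) Z) = (\<Sum>a\<in>UNIV. \<Sum>b\<in>UNIV. \<Sum>m\<in>UNIV. v i m $ a * v m j $ b * cou (mul X (ebas a)) * cou (mul (ebas b) Z))"
    by (simp add: eps1 v_cop_nth sum_distrib_right)
  also have "\<dots> = (\<Sum>m\<in>UNIV. (\<Sum>a\<in>UNIV. v i m $ a * cou (mul X (ebas a))) * (\<Sum>b\<in>UNIV. v m j $ b * cou (mul (ebas b) Z)))"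
    apply (rule trans[OF sum_pull3])
    by (simp only: sum_product) (simp add: mult_ac)
  also have "\<dots> = (\<Sum>m\<in>UNIV. cou (mul X (v i m)) * cou (mul (v m j) Z))"
    by (simp only: mul_exp_r[OF cou_lin] mul_exp_l[OF cou_lin])
  finally show ?thesis .
qed

lemma eps2v: "cou (mul (mul X (v i j)) Z) = (\<Sum>m\<in>UNIV. cou (mul X (v m j)) * cou (mul (v i m) Z))"
proof -
  have "cou (mul (mul X (v i j)) Z) = (\<Sum>a\<in>UNIV. \<Sum>b\<in>UNIV. \<Sum>m\<in>UNIV. v i m $ a * v m j $ b * cou (mul X (ebas b)) * cou (mul (ebas a) Z))"
    by (simp add: eps2[of X] v_cop_nth sum_distrib_right)
  also have "\<dots> = (\<Sum>m\<in>UNIV. (\<Sum>a\<in>UNIV. v i m $ a * cou (mul (ebas a) Z)) * (\<Sum>b\<in>UNIV. v m j $ b * cou (mul X (ebas b))))"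
    apply (rule trans[OF sum_pull3])
    by (simp only: sum_product) (simp add: mult_ac)
  also have "\<dots> = (\<Sum>m\<in>UNIV. cou (mul (v i m) Z) * cou (mul X (v m j)))"
    by (simp only: mul_exp_r[OF cou_lin] mul_exp_l[OF cou_lin])
  also have "\<dots> = (\<Sum>m\<in>UNIV. cou (mul X (v m j)) * cou (mul (v i m) Z))"
    by (simp add: mult.commute)
  finally show ?thesis .
qed

lemma M2A: "(\<Sum>m\<in>UNIV. tens (es (v m y)) (et (v x m))) = (\<Sum>m\<in>UNIV. tens (es (v x m)) (et (v m y)))"
proof (rule vec_eqI')
  fix st :: "'b \<times> 'b"
  obtain s t where st: "st = (s, t)" by (cases st)
  have "(\<Sum>m\<in>UNIV. tens (es (v m y)) (et (v x m))) $ (s, t) =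
     (\<Sum>q\<in>UNIV. \<Sum>p\<in>UNIV. cop one $ (s, q) * cop one $ (p, t) *
        (\<Sum>m\<in>UNIV. cou (mul (ebas p) (v x m)) * cou (mul (v m y) (ebas q))))"
    apply (simp only: sum_component tens_nth es_nth et_nth sum_product)
    apply (rule trans[OF sum.swap], rule sum.cong[OF refl])
    apply (rule trans[OF sum.swap], rule sum.cong[OF refl])
    by (simp add: sum_distrib_left mult_ac)
  also have "\<dots> = (\<Sum>q\<in>UNIV. \<Sum>p\<in>UNIV. cop one $ (s, q) * cop one $ (p, t) * cou (mul (mul (ebas p) (v x y)) (ebas q)))"
    by (simp only: eps1v)
  also have "\<dots> = (\<Sum>q\<in>UNIV. \<Sum>p\<in>UNIV. cop one $ (s, q) * cop one $ (p, t) *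
        (\<Sum>m\<in>UNIV. cou (mul (ebas p) (v m y)) * cou (mul (v x m) (ebas q))))"
    by (simp only: eps2v)
  also have "\<dots> = (\<Sum>m\<in>UNIV. tens (es (v x m)) (et (v m y))) $ (s, t)"
    apply (simp only: sum_component tens_nth es_nth et_nth sum_product)
    apply (rule sym)
    apply (rule trans[OF sum.swap], rule sum.cong[OF refl])
    apply (rule trans[OF sum.swap], rule sum.cong[OF refl])
    by (simp add: sum_distrib_left mult_ac)
  finally show "(\<Sum>m\<in>UNIV. tens (es (v m y)) (et (v x m))) $ st = (\<Sum>m\<in>UNIV. tens (es (v x m)) (et (v m y))) $ st"
    using st by simp
qed

end

lemma adj_mult: "adj (A ** B) = adj B ** adj (A :: complex ^ 'n::finite ^ 'm::finite)"
  by (simp add: adj_def matrix_matrix_mult_def vec_eq_iff mult.commute)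
lemma adj_adj: "adj (adj A) = (A :: complex ^ 'n::finite ^ 'm::finite)"
  by (simp add: adj_def vec_eq_iff)

context wh begin

lemma rho_lin: "\<rho> x $ a $ b = (\<Sum>p\<in>UNIV. x $ p * \<rho> (ebas p) $ a $ b)"
  using lin_expand[OF clin_fun_rho] .

lemma rho_mul_entry: "\<rho> (mul x y) $ a $ b = (\<Sum>c\<in>UNIV. \<rho> x $ a $ c * \<rho> y $ c $ b)"
  by (simp add: rho_mul matrix_matrix_mult_def)

lemma rho_et: "\<rho> (et x) $ a $ b = (\<Sum>p\<in>UNIV. \<Sum>q\<in>UNIV. cop one $ (p, q) * cou (mul (ebas p) x) * \<rho> (ebas q) $ a $ b)"
  apply (subst rho_lin)
  apply (simp add: et_nth sum_distrib_right)
  by (rule sum.swap)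

lemma rho_es: "\<rho> (es x) $ a $ b = (\<Sum>p\<in>UNIV. \<Sum>q\<in>UNIV. cop one $ (p, q) * \<rho> (ebas p) $ a $ b * cou (mul x (ebas q)))"
  apply (subst rho_lin)
  by (simp add: es_nth sum_distrib_right sum_distrib_left mult_ac)

lemma ev2_rho_tens: "ev2 (tens u w) (\<lambda>x. \<rho> x $ a $ b) (\<lambda>x. \<rho> x $ c $ d) = \<rho> u $ a $ b * \<rho> w $ c $ d"
  by (rule ev2_tens[OF clin_fun_rho clin_fun_rho])

lemma M1m: "(\<Sum>c\<in>UNIV. \<rho> (et x) $ a $ c * \<rho> (es y) $ c $ b) = (\<Sum>c\<in>UNIV. \<rho> (es y) $ a $ c * \<rho> (et x) $ c $ b)"
  by (simp only: rho_mul_entry[symmetric] M1A)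

lemma M2m: "(\<Sum>m\<in>UNIV. \<rho> (es (v m y)) $ a $ b * \<rho> (et (v x m)) $ c $ d) =
            (\<Sum>m\<in>UNIV. \<rho> (es (v x m)) $ a $ b * \<rho> (et (v m y)) $ c $ d)"
proof -
  have "ev2 (\<Sum>m\<in>UNIV. tens (es (v m y)) (et (v x m))) (\<lambda>x. \<rho> x $ a $ b) (\<lambda>x. \<rho> x $ c $ d) =
        ev2 (\<Sum>m\<in>UNIV. tens (es (v x m)) (et (v m y))) (\<lambda>x. \<rho> x $ a $ b) (\<lambda>x. \<rho> x $ c $ d)"
    by (simp only: M2A)
  then show ?thesis by (simp only: ev2_sum ev2_rho_tens)
qed

lemma G3m: "(\<Sum>e\<in>UNIV. \<Sum>b\<in>UNIV. \<rho> (mul (es (v i2 e)) (v i1 b)) $ \<alpha> $ \<beta> * \<rho> (mul (v e j2) (et (v b j1))) $ \<gamma> $ \<delta>)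
   = (\<Sum>b\<in>UNIV. \<rho> (v i1 b) $ \<alpha> $ \<beta> * \<rho> (mul (v i2 j2) (et (v b j1))) $ \<gamma> $ \<delta>)"
proof -
  have "ev2 (\<Sum>e\<in>UNIV. \<Sum>b\<in>UNIV. tens (mul (es (v i2 e)) (v i1 b)) (mul (v e j2) (et (v b j1)))) (\<lambda>x. \<rho> x $ \<alpha> $ \<beta>) (\<lambda>x. \<rho> x $ \<gamma> $ \<delta>)
    = ev2 (\<Sum>b\<in>UNIV. tens (v i1 b) (mul (v i2 j2) (et (v b j1)))) (\<lambda>x. \<rho> x $ \<alpha> $ \<beta>) (\<lambda>x. \<rho> x $ \<gamma> $ \<delta>)"
    by (simp only: G3)
  then show ?thesis by (simp only: ev2_sum ev2_rho_tens)
qed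

lemma rho_zero: "\<rho> 0 = 0"
  using rho_add[of 0 0] by simp

lemma rho_sum: "\<rho> (\<Sum>k\<in>A. f k) = (\<Sum>k\<in>A. \<rho> (f k))"
  by (induction A rule: infinite_finite_induct) (simp_all add: rho_zero rho_add)

lemma clin_map_exp: "clin_map g \<Longrightarrow> (\<Sum>b\<in>UNIV. x $ b *s g (ebas b)) = g x"
proof -
  assume g: "clin_map g"
  have "(\<Sum>b\<in>UNIV. x $ b *s g (ebas b)) $ p = g x $ p" for p
    using lin_expand[OF clin_map_nth[OF g, of p], of x] by (simp add: sum_component)
  then show ?thesis by (simp add: vec_eq_iff)
qed

lemma WWm: "(\<Sum>k\<in>UNIV. \<rho> (v i k) ** adj (\<rho> (v j k))) = \<rho> (et (v i j))"
proof -
  have "et (v i j) = (\<Sum>a\<in>UNIV. \<Sum>b\<in>UNIV. cop (v i j) $ (a, b) *s mul (ebas a) (S (ebas b)))"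
    using hopf_t[of "v i j"] by (simp add: et_def eps_t_def)
  also have "\<dots> = (\<Sum>a\<in>UNIV. \<Sum>b\<in>UNIV. \<Sum>k\<in>UNIV. (v i k $ a * v k j $ b) *s mul (ebas a) (S (ebas b)))"
    by (simp add: v_cop_nth smult_sum_left)
  also have "\<dots> = (\<Sum>k\<in>UNIV. \<Sum>a\<in>UNIV. v i k $ a *s (\<Sum>b\<in>UNIV. v k j $ b *s mul (ebas a) (S (ebas b))))"
    apply (rule trans[OF sum_pull3])
    by (simp add: smult_sum_right vector_smult_assoc)
  also have "\<dots> = (\<Sum>k\<in>UNIV. \<Sum>a\<in>UNIV. v i k $ a *s mul (ebas a) (S (v k j)))"
  proof -
    have "\<And>a k. (\<Sum>b\<in>UNIV. v k j $ b *s mul (ebas a) (S (ebas b))) = mul (ebas a) (S (v k j))"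
      by (rule clin_map_exp) (use mul_l S_lin in \<open>simp add: clin_map_def\<close>)
    then show ?thesis by simp
  qed
  also have "\<dots> = (\<Sum>k\<in>UNIV. mul (v i k) (S (v k j)))"
    by (simp only: mul_vec_exp_l)
  finally have e: "et (v i j) = (\<Sum>k\<in>UNIV. mul (v i k) (st (v j k)))" by (simp add: Sv)
  show ?thesis by (simp add: e rho_sum rho_mul rho_st)
qed

end

definition agree :: "'s set \<Rightarrow> 'd ^ 's \<Rightarrow> 'd ^ 's \<Rightarrow> bool" where
  "agree S \<sigma> \<tau> \<longleftrightarrow> (\<forall>m. m \<notin> S \<longrightarrow> \<sigma> $ m = \<tau> $ m)"

definition loc :: "'s::finite set \<Rightarrow> ('d::finite ^ 's \<Rightarrow> 'd ^ 's \<Rightarrow> complex) \<Rightarrow> complex ^ ('d ^ 's) ^ ('d ^ 's)" where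
  "loc S T = (\<chi> \<sigma> \<tau>. if agree S \<sigma> \<tau> then T \<sigma> \<tau> else 0)"

definition upd :: "'d ^ 's \<Rightarrow> 's \<Rightarrow> 'd \<Rightarrow> 'd ^ 's" where
  "upd \<beta> k a = (\<chi> m. if m = k then a else \<beta> $ m)"

definition mix :: "'s set \<Rightarrow> 'd ^ 's \<Rightarrow> 'd ^ 's \<Rightarrow> 'd ^ 's" where
  "mix S \<sigma> \<tau> = (\<chi> m. if m \<in> S then \<tau> $ m else \<sigma> $ m)"

lemma upd_nth[simp]: "upd \<beta> k a $ m = (if m = k then a else \<beta> $ m)"
  by (simp add: upd_def)
lemma mix_nth[simp]: "mix S \<sigma> \<tau> $ m = (if m \<in> S then \<tau> $ m else \<sigma> $ m)"
  by (simp add: mix_def)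

lemma emb2_loc: "emb2 k k' X = loc {k, k'} (\<lambda>\<sigma> \<tau>. X $ (\<sigma> $ k, \<sigma> $ k') $ (\<tau> $ k, \<tau> $ k'))"
  by (simp add: emb2_def loc_def agree_def)

lemma loc_cong: "(\<And>\<sigma> \<tau>. agree S \<sigma> \<tau> \<Longrightarrow> T \<sigma> \<tau> = T' \<sigma> \<tau>) \<Longrightarrow> loc S T = loc S T'"
  by (simp add: loc_def vec_eq_iff)

lemma mid_set: "agree (S \<union> S') \<sigma> \<tau> \<Longrightarrow>
   {\<rho>. agree S \<sigma> \<rho> \<and> agree S' \<rho> \<tau>} = {\<rho>. agree (S \<inter> S') (mix S \<sigma> \<tau>) \<rho>}"
  unfolding agree_def by (auto simp: mix_def) (metis+)

lemma mid_empty: "\<not> agree (S \<union> S') \<sigma> \<tau> \<Longrightarrow> {\<rho>. agree S \<sigma> \<rho> \<and> agree S' \<rho> \<tau>} = {}"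
  unfolding agree_def by auto metis

lemma loc_mult: "loc S T ** loc S' T' =
   loc (S \<union> S') (\<lambda>\<sigma> \<tau>. \<Sum>\<rho>\<in>{\<rho>. agree (S \<inter> S') (mix S \<sigma> \<tau>) \<rho>}. T \<sigma> \<rho> * T' \<rho> \<tau>)"
proof -
  have "(loc S T ** loc S' T') $ \<sigma> $ \<tau> = (\<Sum>\<rho>\<in>{\<rho>. agree S \<sigma> \<rho> \<and> agree S' \<rho> \<tau>}. T \<sigma> \<rho> * T' \<rho> \<tau>)" for \<sigma> \<tau>
  proof -
    have "(loc S T ** loc S' T') $ \<sigma> $ \<tau> = (\<Sum>\<rho>\<in>UNIV. if agree S \<sigma> \<rho> \<and> agree S' \<rho> \<tau> then T \<sigma> \<rho> * T' \<rho> \<tau> else 0)"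
      by (auto simp add: matrix_matrix_mult_def loc_def intro!: sum.cong)
    also have "\<dots> = (\<Sum>\<rho>\<in>{\<rho>. agree S \<sigma> \<rho> \<and> agree S' \<rho> \<tau>}. T \<sigma> \<rho> * T' \<rho> \<tau>)"
      by (simp add: sum.If_cases)
    finally show ?thesis .
  qed
  then show ?thesis
    by (simp add: vec_eq_iff loc_def mid_set mid_empty)
qed

lemma sum_agree0: "(\<Sum>\<rho>\<in>{\<rho>. agree {} \<beta> \<rho>}. f \<rho>) = f \<beta>"
proof -
  have "{\<rho>. agree {} \<beta> \<rho>} = {\<beta>}" by (auto simp: agree_def vec_eq_iff)
  then show ?thesis by simp
qed

lemma sum_agree1: "(\<Sum>\<rho>\<in>{\<rho>. agree {k} (\<beta>::'d::finite ^ 's::finite) \<rho>}. f \<rho>) = (\<Sum>a\<in>UNIV. f (upd \<beta> k a))"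
proof -
  have e: "{\<rho>. agree {k} \<beta> \<rho>} = range (upd \<beta> k)"
  proof (auto simp: agree_def)
    fix \<rho> :: "'d ^ 's" assume "\<forall>m. m \<noteq> k \<longrightarrow> \<beta> $ m = \<rho> $ m"
    then have "\<rho> = upd \<beta> k (\<rho> $ k)" by (auto simp: vec_eq_iff)
    then show "\<rho> \<in> range (upd \<beta> k)" by blast
  qed
  have i: "inj (upd \<beta> k)"
    by (rule injI) (metis upd_nth)
  show ?thesis unfolding e by (simp add: sum.reindex[OF i])
qed

lemma sum_agree2: assumes "k \<noteq> k'"
  shows "(\<Sum>\<rho>\<in>{\<rho>. agree {k, k'} (\<beta>::'d::finite ^ 's::finite) \<rho>}. f \<rho>) = (\<Sum>a\<in>UNIV. \<Sum>b\<in>UNIV. f (upd (upd \<beta> k a) k' b))"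
proof -
  let ?g = "\<lambda>(a, b). upd (upd \<beta> k a) k' b"
  have e: "{\<rho>. agree {k, k'} \<beta> \<rho>} = ?g ` UNIV"
  proof (auto simp: agree_def)
    fix \<rho> :: "'d ^ 's" assume "\<forall>m. m \<noteq> k \<and> m \<noteq> k' \<longrightarrow> \<beta> $ m = \<rho> $ m"
    then have "\<rho> = ?g (\<rho> $ k, \<rho> $ k')" using assms by (auto simp: vec_eq_iff)
    then show "\<rho> \<in> range ?g" by blast
  qed
  have i: "inj ?g"
  proof (rule injI)
    fix x y assume "?g x = ?g y"
    then show "x = y" using assms
      by (cases x, cases y) (metis (no_types, lifting) case_prod_conv upd_nth)
  qed
  have "(\<Sum>\<rho>\<in>{\<rho>. agree {k, k'} \<beta> \<rho>}. f \<rho>) = (\<Sum>x\<in>UNIV. f (?g x))"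
    unfolding e by (simp add: sum.reindex[OF i])
  also have "\<dots> = (\<Sum>a\<in>UNIV. \<Sum>b\<in>UNIV. f (upd (upd \<beta> k a) k' b))"
    by (subst sum.cartesian_product) (simp add: split_def)
  finally show ?thesis .
qed

lemma sum_pairs: "(\<Sum>r\<in>(UNIV::('a::finite \<times> 'b::finite) set). g r) = (\<Sum>a\<in>UNIV. \<Sum>b\<in>UNIV. g (a, b))"
  by (subst sum.cartesian_product) (simp add: split_def)

lemma E1: assumes "k \<noteq> k'"
  shows "emb2 k k' X ** emb2 k k' Y = emb2 k k' (X ** Y)"
proof -
  have "emb2 k k' X ** emb2 k k' Y = loc {k, k'} (\<lambda>\<sigma> \<tau>. \<Sum>\<rho>\<in>{\<rho>. agree {k, k'} (mix {k, k'} \<sigma> \<tau>) \<rho>}.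
      X $ (\<sigma> $ k, \<sigma> $ k') $ (\<rho> $ k, \<rho> $ k') * Y $ (\<rho> $ k, \<rho> $ k') $ (\<tau> $ k, \<tau> $ k'))"
    by (simp add: emb2_loc loc_mult)
  also have "\<dots> = loc {k, k'} (\<lambda>\<sigma> \<tau>. (X ** Y) $ (\<sigma> $ k, \<sigma> $ k') $ (\<tau> $ k, \<tau> $ k'))"
    by (rule loc_cong) (simp add: sum_agree2 assms matrix_matrix_mult_def sum_pairs)
  finally show ?thesis by (simp add: emb2_loc)
qed

lemma E2: assumes "k \<noteq> k'" "l \<noteq> l'" "k \<noteq> l" "k \<noteq> l'" "k' \<noteq> l" "k' \<noteq> l'"
  shows "emb2 k k' X ** emb2 l l' Y = emb2 l l' Y ** emb2 k k' X"
proof -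
  have i: "{k, k'} \<inter> {l, l'} = {}" "{l, l'} \<inter> {k, k'} = {}" using assms by auto
  have u: "{l, l'} \<union> {k, k'} = {k, k'} \<union> {l, l'}" by auto
  show ?thesis
    apply (simp only: emb2_loc loc_mult i u sum_agree0)
    apply (rule loc_cong)
    using assms by (simp add: mult.commute)
qed

lemma E3: assumes "k0 \<noteq> k1" "k1 \<noteq> k2" "k0 \<noteq> k2"
  and H: "\<And>x0 x1 x2 y0 y1 y2. (\<Sum>a\<in>UNIV. X $ (x0, x1) $ (y0, a) * Y $ (a, x2) $ (y1, y2))
             = (\<Sum>a\<in>UNIV. Y $ (x1, x2) $ (a, y2) * X $ (x0, a) $ (y0, y1))"
  shows "emb2 k0 k1 X ** emb2 k1 k2 Y = emb2 k1 k2 Y ** emb2 k0 k1 X"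
proof -
  have i: "{k0, k1} \<inter> {k1, k2} = {k1}" "{k1, k2} \<inter> {k0, k1} = {k1}" using assms by auto
  have u: "{k1, k2} \<union> {k0, k1} = {k0, k1} \<union> {k1, k2}" by auto
  show ?thesis
    apply (simp only: emb2_loc loc_mult i u sum_agree1)
    apply (rule loc_cong)
    using assms by (simp add: H)
qed

lemma E4: fixes s0 s1 s2 s3 :: "'s::finite" and W P Q :: "complex ^ ('d::finite \<times> 'd) ^ ('d \<times> 'd)"
  assumes d: "s0 \<noteq> s1" "s0 \<noteq> s2" "s0 \<noteq> s3" "s1 \<noteq> s2" "s1 \<noteq> s3" "s2 \<noteq> s3"
  and H: "\<And>x0 x1 x2 x3 y0 y1 y2 y3.
    (\<Sum>c\<in>UNIV. \<Sum>e\<in>UNIV. Q $ (x1, x2) $ (c, e) * (\<Sum>b\<in>UNIV. W $ (x0, c) $ (y0, b) *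
        (\<Sum>a\<in>UNIV. W $ (e, x3) $ (a, y3) * P $ (b, a) $ (y1, y2))))
    = (\<Sum>b\<in>UNIV. W $ (x0, x1) $ (y0, b) * (\<Sum>a\<in>UNIV. W $ (x2, x3) $ (a, y3) * P $ (b, a) $ (y1, y2)))"
  shows "emb2 s1 s2 Q ** (emb2 s0 s1 W ** (emb2 s2 s3 W ** emb2 s1 s2 P)) =
         emb2 s0 s1 W ** (emb2 s2 s3 W ** emb2 s1 s2 P)"
proof -
  define T1 where "T1 \<sigma> \<tau> = (\<Sum>a\<in>UNIV. W $ (\<sigma> $ s2, \<sigma> $ s3) $ (a, \<tau> $ s3) * P $ (\<sigma> $ s1, a) $ (\<tau> $ s1, \<tau> $ s2))"
    for \<sigma> \<tau> :: "'d ^ 's"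
  define T2 where "T2 \<sigma> \<tau> = (\<Sum>b\<in>UNIV. W $ (\<sigma> $ s0, \<sigma> $ s1) $ (\<tau> $ s0, b) *
      (\<Sum>a\<in>UNIV. W $ (\<sigma> $ s2, \<sigma> $ s3) $ (a, \<tau> $ s3) * P $ (b, a) $ (\<tau> $ s1, \<tau> $ s2)))"
    for \<sigma> \<tau> :: "'d ^ 's"
  have A: "emb2 s2 s3 W ** emb2 s1 s2 P = loc {s1, s2, s3} T1"
  proof -
    have i: "{s2, s3} \<inter> {s1, s2} = {s2}" and u: "{s2, s3} \<union> {s1, s2} = {s1, s2, s3}" using d by auto
    show ?thesis
      apply (simp only: emb2_loc loc_mult i u sum_agree1)
      apply (rule loc_cong)
      using d by (simp add: T1_def)
  qed
  have B: "emb2 s0 s1 W ** loc {s1, s2, s3} T1 = loc {s0, s1, s2, s3} T2"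
  proof -
    have i: "{s0, s1} \<inter> {s1, s2, s3} = {s1}" and u: "{s0, s1} \<union> {s1, s2, s3} = {s0, s1, s2, s3}" using d by auto
    show ?thesis
      apply (simp only: emb2_loc loc_mult i u sum_agree1)
      apply (rule loc_cong)
      using d by (simp add: T1_def T2_def)
  qed
  have C: "emb2 s1 s2 Q ** loc {s0, s1, s2, s3} T2 = loc {s0, s1, s2, s3} T2"
  proof -
    have i: "{s1, s2} \<inter> {s0, s1, s2, s3} = {s1, s2}" and u: "{s1, s2} \<union> {s0, s1, s2, s3} = {s0, s1, s2, s3}" using d by auto
    show ?thesis
      apply (simp only: emb2_loc loc_mult i u sum_agree2[OF d(4)])
      apply (rule loc_cong)
      using d by (simp add: T2_def H)
  qed
  show ?thesis by (simp only: A B C)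
qed

lemma mpl_Nil[simp]: "mat_prod_list [] = mat 1" by (simp add: mat_prod_list_def)
lemma mpl_Cons[simp]: "mat_prod_list (M # Ms) = M ** mat_prod_list Ms" by (simp add: mat_prod_list_def)

lemma comm_mpl: "(\<And>N. N \<in> set Ms \<Longrightarrow> A ** N = N ** A) \<Longrightarrow> A ** mat_prod_list Ms = mat_prod_list Ms ** A"
proof (induction Ms)
  case Nil then show ?case by (simp add: matrix_mul_lid matrix_mul_rid)
next
  case (Cons M Ms)
  have "A ** (M ** mat_prod_list Ms) = M ** (A ** mat_prod_list Ms)"
    using Cons.prems by (simp add: matrix_mul_assoc)
  also have "\<dots> = M ** mat_prod_list Ms ** A" using Cons by (simp add: matrix_mul_assoc)
  finally show ?case by simp
qed

lemma mpl_comm: "(\<And>A B. A \<in> set As \<Longrightarrow> B \<in> set Bs \<Longrightarrow> A ** B = B ** A) \<Longrightarrow>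
   mat_prod_list As ** mat_prod_list Bs = mat_prod_list Bs ** mat_prod_list As"
proof (induction As)
  case Nil then show ?case by (simp add: matrix_mul_lid matrix_mul_rid)
next
  case (Cons A As)
  have IH: "mat_prod_list As ** mat_prod_list Bs = mat_prod_list Bs ** mat_prod_list As"
    using Cons by auto
  have "A ** mat_prod_list As ** mat_prod_list Bs = A ** mat_prod_list Bs ** mat_prod_list As"
    by (simp add: matrix_mul_assoc[symmetric] IH)
  also have "\<dots> = mat_prod_list Bs ** A ** mat_prod_list As"
    using comm_mpl[of Bs A] Cons.prems by simp
  finally show ?case by (simp add: matrix_mul_assoc)
qed

lemma mpl_zip: "distinct xs \<Longrightarrow> (\<And>i j. i \<in> set xs \<Longrightarrow> j \<in> set xs \<Longrightarrow> i \<noteq> j \<Longrightarrow> g i ** f j = f j ** g i) \<Longrightarrow>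
   mat_prod_list (map f xs) ** mat_prod_list (map g xs) = mat_prod_list (map (\<lambda>i. f i ** g i) xs)"
proof (induction xs)
  case Nil then show ?case by (simp add: matrix_mul_lid)
next
  case (Cons x xs)
  have c: "g x ** mat_prod_list (map f xs) = mat_prod_list (map f xs) ** g x"
    by (rule comm_mpl) (use Cons.prems in auto)
  have "f x ** mat_prod_list (map f xs) ** (g x ** mat_prod_list (map g xs)) =
        f x ** (g x ** mat_prod_list (map f xs)) ** mat_prod_list (map g xs)"
    by (simp add: c matrix_mul_assoc)
  also have "\<dots> = (f x ** g x) ** (mat_prod_list (map f xs) ** mat_prod_list (map g xs))"
    by (simp add: matrix_mul_assoc)
  also have "\<dots> = (f x ** g x) ** mat_prod_list (map (\<lambda>i. f i ** g i) xs)"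
    using Cons by simp
  finally show ?case by simp
qed

lemma mpl_fix: "(\<And>i. i \<in> set xs \<Longrightarrow> f i ** X = X) \<Longrightarrow> mat_prod_list (map f xs) ** X = X"
  by (induction xs) (simp_all add: matrix_mul_lid matrix_mul_assoc[symmetric])

lemma mpl_extract: "distinct xs \<Longrightarrow> a \<in> set xs \<Longrightarrow>
   (\<And>i j. i \<in> set xs \<Longrightarrow> j \<in> set xs \<Longrightarrow> f i ** f j = f j ** f i) \<Longrightarrow>
   mat_prod_list (map f xs) = f a ** mat_prod_list (map f (remove1 a xs))"
proof (induction xs)
  case Nil then show ?case by simp
next
  case (Cons x xs)
  show ?case
  proof (cases "x = a")
    case True then show ?thesis by simp
  next
    case False
    then have "mat_prod_list (map f (x # xs)) = f x ** (f a ** mat_prod_list (map f (remove1 a xs)))"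
      using Cons by simp
    also have "\<dots> = f a ** (f x ** mat_prod_list (map f (remove1 a xs)))"
      using Cons.prems by (simp add: matrix_mul_assoc)
    finally show ?thesis using False by simp
  qed
qed

lemma local_gen:
  assumes dist: "distinct xs" and AB: "A \<in> set xs" "B \<in> set xs" "A \<noteq> B" and C: "C \<in> set xs"
    and wc: "\<And>i j. i \<in> set xs \<Longrightarrow> j \<in> set xs \<Longrightarrow> w i ** w j = w j ** w i"
    and pc: "\<And>i j. i \<in> set xs \<Longrightarrow> j \<in> set xs \<Longrightarrow> p i ** p j = p j ** p i"
    and wp: "\<And>i. i \<in> set xs \<Longrightarrow> i \<noteq> A \<Longrightarrow> i \<noteq> B \<Longrightarrow> w i ** p C = p C ** w i"
    and loc: "q ** (w A ** (w B ** p C)) = w A ** (w B ** p C)"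
  shows "q ** (mat_prod_list (map w xs) ** mat_prod_list (map p xs)) = mat_prod_list (map w xs) ** mat_prod_list (map p xs)"
proof -
  let ?ys = "remove1 B (remove1 A xs)"
  have d1: "distinct (remove1 A xs)" using dist by simp
  have B1: "B \<in> set (remove1 A xs)" using AB dist by (simp add: set_remove1_eq)
  have sy: "set ?ys = set xs - {A, B}" using dist d1 by (auto simp: set_remove1_eq)
  have ew: "mat_prod_list (map w xs) = w A ** (w B ** mat_prod_list (map w ?ys))"
  proof -
    have "mat_prod_list (map w xs) = w A ** mat_prod_list (map w (remove1 A xs))"
      by (rule mpl_extract[OF dist AB(1) wc])
    also have "mat_prod_list (map w (remove1 A xs)) = w B ** mat_prod_list (map w ?ys)"
      by (rule mpl_extract[OF d1 B1]) (use wc in \<open>auto dest: subsetD[OF set_remove1_subset]\<close>)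
    finally show ?thesis .
  qed
  have ep: "mat_prod_list (map p xs) = p C ** mat_prod_list (map p (remove1 C xs))"
    by (rule mpl_extract[OF dist C pc])
  have rc: "mat_prod_list (map w ?ys) ** p C = p C ** mat_prod_list (map w ?ys)"
    by (rule comm_mpl[symmetric]) (use wp sy in auto)
  let ?R = "mat_prod_list (map w ?ys)" and ?S = "mat_prod_list (map p (remove1 C xs))"
  have "mat_prod_list (map w xs) ** mat_prod_list (map p xs) = w A ** (w B ** ?R) ** (p C ** ?S)"
    by (simp only: ew ep)
  also have "\<dots> = w A ** (w B ** ((?R ** p C) ** ?S))" by (simp only: matrix_mul_assoc)
  also have "\<dots> = w A ** (w B ** ((p C ** ?R) ** ?S))" by (simp only: rc)
  also have "\<dots> = (w A ** (w B ** p C)) ** (?R ** ?S)" by (simp only: matrix_mul_assoc)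
  finally have e: "mat_prod_list (map w xs) ** mat_prod_list (map p xs) = (w A ** (w B ** p C)) ** (?R ** ?S)" .
  moreover have "q ** ((w A ** (w B ** p C)) ** (?R ** ?S)) = (w A ** (w B ** p C)) ** (?R ** ?S)"
    by (simp only: matrix_mul_assoc[of q "w A ** (w B ** p C)"] loc)
  ultimately show ?thesis by (simp only: e)
qed

lemma site_rep: "Rep_bit0 (site a :: 'L::finite bit0) = int a mod (2 * int CARD('L))"
  unfolding site_def by (simp add: bit0.of_nat_eq Abs_bit0_inverse)

lemma site_eq: "(site a :: 'L::finite bit0) = site b \<longleftrightarrow> a mod (2 * CARD('L)) = b mod (2 * CARD('L))"
proof -
  have "(site a :: 'L bit0) = site b \<longleftrightarrow> Rep_bit0 (site a :: 'L bit0) = Rep_bit0 (site b :: 'L bit0)"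
    by (simp add: Rep_bit0_inject)
  also have "\<dots> \<longleftrightarrow> int a mod int (2 * CARD('L)) = int b mod int (2 * CARD('L))" by (simp add: site_rep)
  also have "\<dots> \<longleftrightarrow> a mod (2 * CARD('L)) = b mod (2 * CARD('L))"
    by (metis of_nat_eq_iff of_nat_mod)
  finally show ?thesis .
qed

lemma mod_small: "(N::nat) > 0 \<Longrightarrow> x < 2 * N \<Longrightarrow> x mod N = (if x < N then x else x - N)"
  by (simp add: le_mod_geq)

lemma site_parity: "(site a :: 'L::finite bit0) = site b \<Longrightarrow> even a = even b"
proof -
  assume "(site a :: 'L bit0) = site b"
  then have "a mod (2 * CARD('L)) = b mod (2 * CARD('L))" by (simp add: site_eq)
  then have "a mod (2 * CARD('L)) mod 2 = b mod (2 * CARD('L)) mod 2" by simp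
  then have "a mod 2 = b mod 2" by (simp add: mod_mod_cancel)
  then show ?thesis by (simp add: even_iff_mod_2_eq_zero)
qed

lemma site_shift_ne: "0 < d \<Longrightarrow> d < 2 * CARD('L) \<Longrightarrow> (site a :: 'L::finite bit0) \<noteq> site (a + d)"
proof
  assume d: "0 < d" "d < 2 * CARD('L)" and e: "(site a :: 'L bit0) = site (a + d)"
  then have "a mod (2 * CARD('L)) = (a + d) mod (2 * CARD('L))" by (simp add: site_eq)
  then have "(2 * CARD('L)) dvd d"
    using mod_eq_dvd_iff_nat[of a "a + d" "2 * CARD('L)"] by simp
  with d show False by (simp add: nat_dvd_not_less)
qed

lemma site_wrap: "(site (a + 2 * CARD('L)) :: 'L::finite bit0) = site a"
  by (simp add: site_eq)

context
  fixes n :: nat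
  assumes n: "n = CARD('L::finite)"
begin

lemma sE: "i \<in> {1..n} \<Longrightarrow> j \<in> {1..n} \<Longrightarrow> (site (2 * i) :: 'L bit0) = site (2 * j) \<longleftrightarrow> i = j"
  unfolding site_eq n[symmetric]
  by (subst (1 2) mod_small) (auto | presburger)+

lemma sO: "i \<in> {1..n} \<Longrightarrow> j \<in> {1..n} \<Longrightarrow> (site (2 * i + 1) :: 'L bit0) = site (2 * j + 1) \<longleftrightarrow> i = j"
  unfolding site_eq n[symmetric]
  by (subst (1 2) mod_small) (auto | presburger)+

lemma sO': "i \<in> {1..n} \<Longrightarrow> j \<in> {1..n} \<Longrightarrow> (site (2 * i - 1) :: 'L bit0) = site (2 * j - 1) \<longleftrightarrow> i = j"
  unfolding site_eq n[symmetric]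
  by (subst (1 2) mod_small) (auto | presburger)+

lemma sX: "i \<in> {1..n} \<Longrightarrow> j \<in> {1..n} \<Longrightarrow> (site (2 * i - 1) :: 'L bit0) = site (2 * j + 1) \<longleftrightarrow> i = (if j = n then 1 else j + 1)"
  unfolding site_eq n[symmetric]
  by (subst (1 2) mod_small) (auto | presburger)+

end

definition nx :: "nat \<Rightarrow> nat \<Rightarrow> nat" where "nx n j = (if j = n then 1 else j + 1)"
definition pv :: "nat \<Rightarrow> nat \<Rightarrow> nat" where "pv n j = (if j = 1 then n else j - 1)"

abbreviation sitL :: "nat \<Rightarrow> 'L::finite bit0" where "sitL m \<equiv> site m"

context
  fixes n :: nat
  assumes n: "n = CARD('L::finite)" and n2: "2 \<le> n"
begin

lemma par: "even a \<Longrightarrow> odd b \<Longrightarrow> (site a :: 'L bit0) \<noteq> site b"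
  using site_parity by blast

lemma dhi: "j \<in> {1..n} \<Longrightarrow> (site (2 * j - 1) :: 'L bit0) \<noteq> site (2 * j)"
  using par[of "2 * j" "2 * j - 1"] by auto

lemma dih: "(site (2 * j) :: 'L bit0) \<noteq> site (2 * j + 1)"
  using par[of "2 * j" "2 * j + 1"] by auto

lemma nx_in: "j \<in> {1..n} \<Longrightarrow> nx n j \<in> {1..n}" by (auto simp: nx_def)
lemma pv_in: "j \<in> {1..n} \<Longrightarrow> pv n j \<in> {1..n}" by (auto simp: pv_def)
lemma nx_ne: "j \<in> {1..n} \<Longrightarrow> nx n j \<noteq> j" using n2 by (auto simp: nx_def)
lemma pv_ne: "j \<in> {1..n} \<Longrightarrow> pv n j \<noteq> j" using n2 by (auto simp: pv_def)
lemma nx_pv: "i \<in> {1..n} \<Longrightarrow> j \<in> {1..n} \<Longrightarrow> j = nx n i \<longleftrightarrow> i = pv n j"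
  by (auto simp: nx_def pv_def)

lemma sites_nx: "j \<in> {1..n} \<Longrightarrow> (site (2 * nx n j - 1) :: 'L bit0) = site (2 * j + 1) \<and>
    (site (2 * nx n j) :: 'L bit0) = site (2 * j + 2)"
proof -
  assume j: "j \<in> {1..n}"
  show ?thesis
  proof (cases "j = n")
    case True
    have "(site 1 :: 'L bit0) = site (2 * n + 1)" "(site 2 :: 'L bit0) = site (2 * n + 2)"
      using site_wrap[of 1, where 'L='L] site_wrap[of 2, where 'L='L] n by (simp_all add: add.commute)
    then show ?thesis using True by (simp add: nx_def)
  next
    case False
    then show ?thesis using j by (simp add: nx_def)
  qed
qed

lemma sites_pv: "j \<in> {1..n} \<Longrightarrow> (site (2 * pv n j) :: 'L bit0) = site (2 * j - 2) \<and>
    (site (2 * pv n j + 1) :: 'L bit0) = site (2 * j - 1)"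
proof -
  assume j: "j \<in> {1..n}"
  show ?thesis
  proof (cases "j = 1")
    case True
    have "(site (2 * n) :: 'L bit0) = site 0" "(site (2 * n + 1) :: 'L bit0) = site 1"
      using site_wrap[of 0, where 'L='L] site_wrap[of 1, where 'L='L] n by (simp_all add: add.commute)
    then show ?thesis using True by (simp add: pv_def)
  next
    case False
    then have "2 * (j - 1) = 2 * j - 2" "2 * (j - 1) + 1 = 2 * j - 1" using j by auto
    then show ?thesis using False by (simp add: pv_def)
  qed
qed

lemma dist4: assumes "b = a + 1" "c = a + 2" "d = a + 3"
  shows "(site a :: 'L bit0) \<noteq> site b \<and> (site a :: 'L bit0) \<noteq> site c \<and> (site a :: 'L bit0) \<noteq> site d \<and>
  (site b :: 'L bit0) \<noteq> site c \<and> (site b :: 'L bit0) \<noteq> site d \<and> (site c :: 'L bit0) \<noteq> site d"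
proof -
  have h: "(site x :: 'L bit0) \<noteq> site (x + e)" if "0 < e" "e \<le> 3" for x e
    by (rule site_shift_ne) (use that n n2 in auto)
  have e: "b = a + 1" "c = a + 2" "d = a + 3" "c = b + 1" "d = b + 2" "d = c + 1" using assms by simp_all
  show ?thesis
    apply (intro conjI)
    apply (subst e(1), rule h, simp, simp)
    apply (subst e(2), rule h, simp, simp)
    apply (subst e(3), rule h, simp, simp)
    apply (subst e(4), rule h, simp, simp)
    apply (subst e(5), rule h, simp, simp)
    apply (subst e(6), rule h, simp, simp)
    done
qed

lemma comm_hi: "i \<in> {1..n} \<Longrightarrow> j \<in> {1..n} \<Longrightarrow>
  emb2 (site (2 * i - 1) :: 'L bit0) (site (2 * i)) X ** emb2 (site (2 * j - 1)) (site (2 * j)) Y =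
  emb2 (site (2 * j - 1)) (site (2 * j)) Y ** emb2 (site (2 * i - 1) :: 'L bit0) (site (2 * i)) X"
  if "i \<noteq> j"
  apply (rule E2)
  using that dhi sO'[OF n] sE[OF n] par[of "2 * i" "2 * j - 1"] par[of "2 * j" "2 * i - 1"] by auto

lemma comm_ih: "i \<in> {1..n} \<Longrightarrow> j \<in> {1..n} \<Longrightarrow>
  emb2 (site (2 * i) :: 'L bit0) (site (2 * i + 1)) X ** emb2 (site (2 * j)) (site (2 * j + 1)) Y =
  emb2 (site (2 * j)) (site (2 * j + 1)) Y ** emb2 (site (2 * i) :: 'L bit0) (site (2 * i + 1)) X"
  if "i \<noteq> j"
  apply (rule E2)
  using that dih sO[OF n] sE[OF n] par[of "2 * i" "2 * j + 1"] par[of "2 * j" "2 * i + 1"] by auto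


lemma comm_mixed:
  fixes P Q :: "complex ^ ('d::finite \<times> 'd) ^ ('d \<times> 'd)"
  assumes i: "i \<in> {1..n}" and j: "j \<in> {1..n}"
    and HPQ: "\<And>x0 x1 x2 y0 y1 y2. (\<Sum>a\<in>UNIV. P $ (x0, x1) $ (y0, a) * Q $ (a, x2) $ (y1, y2))
             = (\<Sum>a\<in>UNIV. Q $ (x1, x2) $ (a, y2) * P $ (x0, a) $ (y0, y1))"
    and HQP: "\<And>x0 x1 x2 y0 y1 y2. (\<Sum>a\<in>UNIV. Q $ (x0, x1) $ (y0, a) * P $ (a, x2) $ (y1, y2))
             = (\<Sum>a\<in>UNIV. P $ (x1, x2) $ (a, y2) * Q $ (x0, a) $ (y0, y1))"
  shows "emb2 (site (2 * i) :: 'L bit0) (site (2 * i + 1)) P ** emb2 (site (2 * j - 1)) (site (2 * j)) Q =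
         emb2 (site (2 * j - 1)) (site (2 * j)) Q ** emb2 (site (2 * i) :: 'L bit0) (site (2 * i + 1)) P"
proof (cases "j = i")
  case True
  have d: "(site (2 * i - 1) :: 'L bit0) \<noteq> site (2 * i)" "(site (2 * i) :: 'L bit0) \<noteq> site (2 * i + 1)"
     "(site (2 * i - 1) :: 'L bit0) \<noteq> site (2 * i + 1)"
    using dist4[of "2 * i" "2 * i - 1" "2 * i + 1" "2 * i + 2"] i by auto
  show ?thesis using E3[OF d HQP] True by simp
next
  case False
  show ?thesis
  proof (cases "j = nx n i")
    case True
    have s: "(site (2 * j - 1) :: 'L bit0) = site (2 * i + 1)" "(site (2 * j) :: 'L bit0) = site (2 * i + 2)"
      using sites_nx[OF i] True by auto
    have d: "(site (2 * i) :: 'L bit0) \<noteq> site (2 * i + 1)" "(site (2 * i + 1) :: 'L bit0) \<noteq> site (2 * i + 2)"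
     "(site (2 * i) :: 'L bit0) \<noteq> site (2 * i + 2)"
      using dist4[of "2 * i + 1" "2 * i" "2 * i + 2" "2 * i + 3"] by auto
    show ?thesis unfolding s using E3[OF d HPQ] by simp
  next
    case nnx: False
    have a1: "(site (2 * i) :: 'L bit0) \<noteq> site (2 * j - 1)" using par[of "2 * i" "2 * j - 1"] j by auto
    have a2: "(site (2 * i) :: 'L bit0) \<noteq> site (2 * j)" using sE[OF n i j] False by auto
    have a3: "(site (2 * i + 1) :: 'L bit0) \<noteq> site (2 * j - 1)" using sX[OF n j i] nnx unfolding nx_def by metis
    have a4: "(site (2 * i + 1) :: 'L bit0) \<noteq> site (2 * j)" using par[of "2 * j" "2 * i + 1"] by auto
    show ?thesis by (rule E2[OF dih dhi[OF j] a1 a2 a3 a4])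
  qed
qed

lemma loc1:
  fixes P Q W :: "complex ^ ('d::finite \<times> 'd) ^ ('d \<times> 'd)"
  assumes j: "j \<in> {1..n}"
  and H: "\<And>x0 x1 x2 x3 y0 y1 y2 y3.
    (\<Sum>c\<in>UNIV. \<Sum>e\<in>UNIV. Q $ (x1, x2) $ (c, e) * (\<Sum>b\<in>UNIV. W $ (x0, c) $ (y0, b) *
        (\<Sum>a\<in>UNIV. W $ (e, x3) $ (a, y3) * P $ (b, a) $ (y1, y2))))
    = (\<Sum>b\<in>UNIV. W $ (x0, x1) $ (y0, b) * (\<Sum>a\<in>UNIV. W $ (x2, x3) $ (a, y3) * P $ (b, a) $ (y1, y2)))"
  shows "emb2 (site (2 * j) :: 'L bit0) (site (2 * j + 1)) Q **
    (mat_prod_list (map (\<lambda>i. emb2 (site (2 * i - 1) :: 'L bit0) (site (2 * i)) W) [1..<n + 1]) **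
     mat_prod_list (map (\<lambda>i. emb2 (site (2 * i) :: 'L bit0) (site (2 * i + 1)) P) [1..<n + 1])) =
    mat_prod_list (map (\<lambda>i. emb2 (site (2 * i - 1) :: 'L bit0) (site (2 * i)) W) [1..<n + 1]) **
     mat_prod_list (map (\<lambda>i. emb2 (site (2 * i) :: 'L bit0) (site (2 * i + 1)) P) [1..<n + 1])"
proof (rule local_gen[where A = j and B = "nx n j" and C = j])
  show "distinct [1..<n + 1]" by simp
  show "j \<in> set [1..<n + 1]" "nx n j \<in> set [1..<n + 1]" "j \<noteq> nx n j"
    using j nx_in[OF j] nx_ne[OF j] by auto
  show "j \<in> set [1..<n + 1]" using j by auto
  show "emb2 (site (2 * i - 1) :: 'L bit0) (site (2 * i)) W ** emb2 (site (2 * k - 1)) (site (2 * k)) W =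
        emb2 (site (2 * k - 1)) (site (2 * k)) W ** emb2 (site (2 * i - 1) :: 'L bit0) (site (2 * i)) W"
    if "i \<in> set [1..<n + 1]" "k \<in> set [1..<n + 1]" for i k
    using that comm_hi[of i k W W] by (cases "i = k") auto
  show "emb2 (site (2 * i) :: 'L bit0) (site (2 * i + 1)) P ** emb2 (site (2 * k)) (site (2 * k + 1)) P =
        emb2 (site (2 * k)) (site (2 * k + 1)) P ** emb2 (site (2 * i) :: 'L bit0) (site (2 * i + 1)) P"
    if "i \<in> set [1..<n + 1]" "k \<in> set [1..<n + 1]" for i k
    using that comm_ih[of i k P P] by (cases "i = k") auto
  show "emb2 (site (2 * i - 1) :: 'L bit0) (site (2 * i)) W ** emb2 (site (2 * j)) (site (2 * j + 1)) P =
        emb2 (site (2 * j)) (site (2 * j + 1)) P ** emb2 (site (2 * i - 1) :: 'L bit0) (site (2 * i)) W"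
    if "i \<in> set [1..<n + 1]" "i \<noteq> j" "i \<noteq> nx n j" for i
  proof -
    have i: "i \<in> {1..n}" using that by auto
    have a1: "(site (2 * i - 1) :: 'L bit0) \<noteq> site (2 * j)" using par[of "2 * j" "2 * i - 1"] i by auto
    have a2: "(site (2 * i - 1) :: 'L bit0) \<noteq> site (2 * j + 1)" using sX[OF n i j] that(3) unfolding nx_def by metis
    have a3: "(site (2 * i) :: 'L bit0) \<noteq> site (2 * j)" using sE[OF n i j] that(2) by auto
    have a4: "(site (2 * i) :: 'L bit0) \<noteq> site (2 * j + 1)" using par[of "2 * i" "2 * j + 1"] by auto
    show ?thesis by (rule E2[OF dhi[OF i] dih a1 a2 a3 a4])
  qed
  have s: "(site (2 * nx n j - 1) :: 'L bit0) = site (2 * j + 1)" "(site (2 * nx n j) :: 'L bit0) = site (2 * j + 2)"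
    using sites_nx[OF j] by auto
  have d: "(site (2 * j - 1) :: 'L bit0) \<noteq> site (2 * j)" "(site (2 * j - 1) :: 'L bit0) \<noteq> site (2 * j + 1)"
    "(site (2 * j - 1) :: 'L bit0) \<noteq> site (2 * j + 2)" "(site (2 * j) :: 'L bit0) \<noteq> site (2 * j + 1)"
    "(site (2 * j) :: 'L bit0) \<noteq> site (2 * j + 2)" "(site (2 * j + 1) :: 'L bit0) \<noteq> site (2 * j + 2)"
    using dist4[of "2 * j" "2 * j - 1" "2 * j + 1" "2 * j + 2"] j by auto
  show "emb2 (site (2 * j) :: 'L bit0) (site (2 * j + 1)) Q **
    (emb2 (site (2 * j - 1)) (site (2 * j)) W ** (emb2 (site (2 * nx n j - 1)) (site (2 * nx n j)) W **
      emb2 (site (2 * j)) (site (2 * j + 1)) P)) =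
    emb2 (site (2 * j - 1)) (site (2 * j)) W ** (emb2 (site (2 * nx n j - 1)) (site (2 * nx n j)) W **
      emb2 (site (2 * j)) (site (2 * j + 1)) P)"
    unfolding s by (rule E4[OF d H])
qed


lemma loc2:
  fixes P Q W :: "complex ^ ('d::finite \<times> 'd) ^ ('d \<times> 'd)"
  assumes j: "j \<in> {1..n}"
  and H: "\<And>x0 x1 x2 x3 y0 y1 y2 y3.
    (\<Sum>c\<in>UNIV. \<Sum>e\<in>UNIV. Q $ (x1, x2) $ (c, e) * (\<Sum>b\<in>UNIV. W $ (x0, c) $ (y0, b) *
        (\<Sum>a\<in>UNIV. W $ (e, x3) $ (a, y3) * P $ (b, a) $ (y1, y2))))
    = (\<Sum>b\<in>UNIV. W $ (x0, x1) $ (y0, b) * (\<Sum>a\<in>UNIV. W $ (x2, x3) $ (a, y3) * P $ (b, a) $ (y1, y2)))"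
  shows "emb2 (site (2 * j - 1) :: 'L bit0) (site (2 * j)) Q **
    (mat_prod_list (map (\<lambda>i. emb2 (site (2 * i) :: 'L bit0) (site (2 * i + 1)) W) [1..<n + 1]) **
     mat_prod_list (map (\<lambda>i. emb2 (site (2 * i - 1) :: 'L bit0) (site (2 * i)) P) [1..<n + 1])) =
    mat_prod_list (map (\<lambda>i. emb2 (site (2 * i) :: 'L bit0) (site (2 * i + 1)) W) [1..<n + 1]) **
     mat_prod_list (map (\<lambda>i. emb2 (site (2 * i - 1) :: 'L bit0) (site (2 * i)) P) [1..<n + 1])"
proof (rule local_gen[where A = "pv n j" and B = j and C = j])
  show "distinct [1..<n + 1]" by simp
  show "pv n j \<in> set [1..<n + 1]" "j \<in> set [1..<n + 1]" "pv n j \<noteq> j"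
    using j pv_in[OF j] pv_ne[OF j] by auto
  show "j \<in> set [1..<n + 1]" using j by auto
  show "emb2 (site (2 * i) :: 'L bit0) (site (2 * i + 1)) W ** emb2 (site (2 * k)) (site (2 * k + 1)) W =
        emb2 (site (2 * k)) (site (2 * k + 1)) W ** emb2 (site (2 * i) :: 'L bit0) (site (2 * i + 1)) W"
    if "i \<in> set [1..<n + 1]" "k \<in> set [1..<n + 1]" for i k
    using that comm_ih[of i k W W] by (cases "i = k") auto
  show "emb2 (site (2 * i - 1) :: 'L bit0) (site (2 * i)) P ** emb2 (site (2 * k - 1)) (site (2 * k)) P =
        emb2 (site (2 * k - 1)) (site (2 * k)) P ** emb2 (site (2 * i - 1) :: 'L bit0) (site (2 * i)) P"
    if "i \<in> set [1..<n + 1]" "k \<in> set [1..<n + 1]" for i k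
    using that comm_hi[of i k P P] by (cases "i = k") auto
  show "emb2 (site (2 * i) :: 'L bit0) (site (2 * i + 1)) W ** emb2 (site (2 * j - 1)) (site (2 * j)) P =
        emb2 (site (2 * j - 1)) (site (2 * j)) P ** emb2 (site (2 * i) :: 'L bit0) (site (2 * i + 1)) W"
    if "i \<in> set [1..<n + 1]" "i \<noteq> pv n j" "i \<noteq> j" for i
  proof -
    have i: "i \<in> {1..n}" using that by auto
    have a1: "(site (2 * i) :: 'L bit0) \<noteq> site (2 * j - 1)" using par[of "2 * i" "2 * j - 1"] j by auto
    have a2: "(site (2 * i) :: 'L bit0) \<noteq> site (2 * j)" using sE[OF n i j] that(3) by auto
    have a3: "(site (2 * i + 1) :: 'L bit0) \<noteq> site (2 * j - 1)"
      using sX[OF n j i] nx_pv[OF i j] that(2) unfolding nx_def by metis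
    have a4: "(site (2 * i + 1) :: 'L bit0) \<noteq> site (2 * j)" using par[of "2 * j" "2 * i + 1"] by auto
    show ?thesis by (rule E2[OF dih dhi[OF j] a1 a2 a3 a4])
  qed
  have s: "(site (2 * pv n j) :: 'L bit0) = site (2 * j - 2)" "(site (2 * pv n j + 1) :: 'L bit0) = site (2 * j - 1)"
    using sites_pv[OF j] by auto
  have d: "(site (2 * j - 2) :: 'L bit0) \<noteq> site (2 * j - 1)" "(site (2 * j - 2) :: 'L bit0) \<noteq> site (2 * j)"
    "(site (2 * j - 2) :: 'L bit0) \<noteq> site (2 * j + 1)" "(site (2 * j - 1) :: 'L bit0) \<noteq> site (2 * j)"
    "(site (2 * j - 1) :: 'L bit0) \<noteq> site (2 * j + 1)" "(site (2 * j) :: 'L bit0) \<noteq> site (2 * j + 1)"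
  proof -
    have e: "2 * j - 1 = (2 * j - 2) + 1" "2 * j = (2 * j - 2) + 2" "2 * j + 1 = (2 * j - 2) + 3" using j by auto
    show "(site (2 * j - 2) :: 'L bit0) \<noteq> site (2 * j - 1)" "(site (2 * j - 2) :: 'L bit0) \<noteq> site (2 * j)"
    "(site (2 * j - 2) :: 'L bit0) \<noteq> site (2 * j + 1)" "(site (2 * j - 1) :: 'L bit0) \<noteq> site (2 * j)"
    "(site (2 * j - 1) :: 'L bit0) \<noteq> site (2 * j + 1)" "(site (2 * j) :: 'L bit0) \<noteq> site (2 * j + 1)"
      using dist4[OF e] by auto
  qed
  show "emb2 (site (2 * j - 1) :: 'L bit0) (site (2 * j)) Q **
    (emb2 (site (2 * pv n j)) (site (2 * pv n j + 1)) W ** (emb2 (site (2 * j)) (site (2 * j + 1)) W **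
      emb2 (site (2 * j - 1)) (site (2 * j)) P)) =
    emb2 (site (2 * pv n j)) (site (2 * pv n j + 1)) W ** (emb2 (site (2 * j)) (site (2 * j + 1)) W **
      emb2 (site (2 * j - 1)) (site (2 * j)) P)"
    unfolding s by (rule E4[OF d H])
qed

lemma emb2_one: "k \<noteq> k' \<Longrightarrow> emb2 k k' (mat 1 :: complex ^ ('d::finite \<times> 'd) ^ ('d \<times> 'd)) = (mat 1 :: complex ^ ('d ^ 's::finite) ^ ('d ^ 's))"
  by (auto simp: emb2_def mat_def vec_eq_iff)


lemma hi_def: "(prod_half_int X :: complex ^ ('d::finite ^ 'L bit0) ^ ('d ^ 'L bit0)) =
  mat_prod_list (map (\<lambda>i. emb2 (site (2 * i - 1) :: 'L bit0) (site (2 * i)) X) [1..<n + 1])"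
  by (simp add: prod_half_int_def n)
lemma ih_def: "(prod_int_half X :: complex ^ ('d::finite ^ 'L bit0) ^ ('d ^ 'L bit0)) =
  mat_prod_list (map (\<lambda>i. emb2 (site (2 * i) :: 'L bit0) (site (2 * i + 1)) X) [1..<n + 1])"
  by (simp add: prod_int_half_def n)

lemma zip_hi: "(prod_half_int X :: complex ^ ('d::finite ^ 'L bit0) ^ ('d ^ 'L bit0)) ** prod_half_int Y = prod_half_int (X ** Y)"
proof -
  have "mat_prod_list (map (\<lambda>i. emb2 (site (2 * i - 1) :: 'L bit0) (site (2 * i)) X) [1..<n + 1]) **
        mat_prod_list (map (\<lambda>i. emb2 (site (2 * i - 1) :: 'L bit0) (site (2 * i)) Y) [1..<n + 1]) =
        mat_prod_list (map (\<lambda>i. emb2 (site (2 * i - 1) :: 'L bit0) (site (2 * i)) X **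
                                  emb2 (site (2 * i - 1) :: 'L bit0) (site (2 * i)) Y) [1..<n + 1])"
    apply (rule mpl_zip)
     apply simp
    apply (rule comm_hi)
    by auto
  also have "\<dots> = mat_prod_list (map (\<lambda>i. emb2 (site (2 * i - 1) :: 'L bit0) (site (2 * i)) (X ** Y)) [1..<n + 1])"
    by (rule arg_cong[where f = mat_prod_list], rule map_cong[OF refl], rule E1, rule dhi) auto
  finally show ?thesis by (simp only: hi_def)
qed

lemma zip_ih: "(prod_int_half X :: complex ^ ('d::finite ^ 'L bit0) ^ ('d ^ 'L bit0)) ** prod_int_half Y = prod_int_half (X ** Y)"
proof -
  have "mat_prod_list (map (\<lambda>i. emb2 (site (2 * i) :: 'L bit0) (site (2 * i + 1)) X) [1..<n + 1]) **
        mat_prod_list (map (\<lambda>i. emb2 (site (2 * i) :: 'L bit0) (site (2 * i + 1)) Y) [1..<n + 1]) =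
        mat_prod_list (map (\<lambda>i. emb2 (site (2 * i) :: 'L bit0) (site (2 * i + 1)) X **
                                  emb2 (site (2 * i) :: 'L bit0) (site (2 * i + 1)) Y) [1..<n + 1])"
    apply (rule mpl_zip)
     apply simp
    apply (rule comm_ih)
    by auto
  also have "\<dots> = mat_prod_list (map (\<lambda>i. emb2 (site (2 * i) :: 'L bit0) (site (2 * i + 1)) (X ** Y)) [1..<n + 1])"
    by (rule arg_cong[where f = mat_prod_list], rule map_cong[OF refl], rule E1, rule dih)
  finally show ?thesis by (simp only: ih_def)
qed

lemma mpl_ones: "(\<And>i. i \<in> set xs \<Longrightarrow> f i = mat 1) \<Longrightarrow> mat_prod_list (map f xs) = mat 1"
  by (induction xs) (auto simp: matrix_mul_lid)

lemma one_hi: "(prod_half_int (mat 1) :: complex ^ ('d::finite ^ 'L bit0) ^ ('d ^ 'L bit0)) = mat 1"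
  unfolding hi_def by (rule mpl_ones, rule emb2_one, rule dhi) auto
lemma one_ih: "(prod_int_half (mat 1) :: complex ^ ('d::finite ^ 'L bit0) ^ ('d ^ 'L bit0)) = mat 1"
  unfolding ih_def by (rule mpl_ones, rule emb2_one, rule dih)


lemma comm_PQ:
  fixes P Q :: "complex ^ ('d::finite \<times> 'd) ^ ('d \<times> 'd)"
  assumes HPQ: "\<And>x0 x1 x2 y0 y1 y2. (\<Sum>a\<in>UNIV. P $ (x0, x1) $ (y0, a) * Q $ (a, x2) $ (y1, y2))
             = (\<Sum>a\<in>UNIV. Q $ (x1, x2) $ (a, y2) * P $ (x0, a) $ (y0, y1))"
    and HQP: "\<And>x0 x1 x2 y0 y1 y2. (\<Sum>a\<in>UNIV. Q $ (x0, x1) $ (y0, a) * P $ (a, x2) $ (y1, y2))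
             = (\<Sum>a\<in>UNIV. P $ (x1, x2) $ (a, y2) * Q $ (x0, a) $ (y0, y1))"
  shows "(prod_int_half P :: complex ^ ('d ^ 'L bit0) ^ ('d ^ 'L bit0)) ** prod_half_int Q = prod_half_int Q ** prod_int_half P"
  unfolding hi_def ih_def
  apply (rule mpl_comm)
  apply (unfold set_map)
  apply (elim imageE)
  apply hypsubst
  apply (rule comm_mixed[OF _ _ HPQ HQP])
  by auto

lemma fix1:
  fixes P Q W :: "complex ^ ('d::finite \<times> 'd) ^ ('d \<times> 'd)"
  assumes H: "\<And>x0 x1 x2 x3 y0 y1 y2 y3.
    (\<Sum>c\<in>UNIV. \<Sum>e\<in>UNIV. Q $ (x1, x2) $ (c, e) * (\<Sum>b\<in>UNIV. W $ (x0, c) $ (y0, b) *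
        (\<Sum>a\<in>UNIV. W $ (e, x3) $ (a, y3) * P $ (b, a) $ (y1, y2))))
    = (\<Sum>b\<in>UNIV. W $ (x0, x1) $ (y0, b) * (\<Sum>a\<in>UNIV. W $ (x2, x3) $ (a, y3) * P $ (b, a) $ (y1, y2)))"
  shows "(prod_int_half Q :: complex ^ ('d ^ 'L bit0) ^ ('d ^ 'L bit0)) ** (prod_half_int W ** prod_int_half P) = prod_half_int W ** prod_int_half P"
  unfolding hi_def ih_def
  apply (rule mpl_fix)
  apply (rule loc1[OF _ H])
  by auto

lemma fix2:
  fixes P Q W :: "complex ^ ('d::finite \<times> 'd) ^ ('d \<times> 'd)"
  assumes H: "\<And>x0 x1 x2 x3 y0 y1 y2 y3.
    (\<Sum>c\<in>UNIV. \<Sum>e\<in>UNIV. Q $ (x1, x2) $ (c, e) * (\<Sum>b\<in>UNIV. W $ (x0, c) $ (y0, b) *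
        (\<Sum>a\<in>UNIV. W $ (e, x3) $ (a, y3) * P $ (b, a) $ (y1, y2))))
    = (\<Sum>b\<in>UNIV. W $ (x0, x1) $ (y0, b) * (\<Sum>a\<in>UNIV. W $ (x2, x3) $ (a, y3) * P $ (b, a) $ (y1, y2)))"
  shows "(prod_half_int Q :: complex ^ ('d ^ 'L bit0) ^ ('d ^ 'L bit0)) ** (prod_int_half W ** prod_half_int P) = prod_int_half W ** prod_half_int P"
  unfolding hi_def ih_def
  apply (rule mpl_fix)
  apply (rule loc2[OF _ H])
  by auto

end

lemma ranges:
  fixes Uo Ue Phat Phalf Uo' Ue' :: "complex ^ 'n::finite ^ 'n"
  assumes g1: "Phalf ** Uo ** Phat = Uo ** Phat" and g2: "Phat ** Ue ** Phalf = Ue ** Phalf"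
    and io: "Uo' ** Uo = mat 1" and ie: "Ue' ** Ue = mat 1"
  shows "(\<lambda>x. Uo *v x) ` range (\<lambda>x. Phat *v x) = range (\<lambda>x. Phalf *v x) \<and>
      (\<lambda>x. Ue *v x) ` range (\<lambda>x. Phalf *v x) = range (\<lambda>x. Phat *v x) \<and>
      (\<lambda>x. (Ue ** Uo) *v x) ` range (\<lambda>x. Phat *v x) \<subseteq> range (\<lambda>x. Phat *v x)"
proof -
  let ?R = "range (\<lambda>x. Phat *v x)" and ?H = "range (\<lambda>x. Phalf *v x)"
  have s1: "(\<lambda>x. Uo *v x) ` ?R \<subseteq> ?H"
  proof clarify
    fix x
    have "Uo *v (Phat *v x) = (Phalf ** Uo ** Phat) *v x" by (simp only: matrix_vector_mul_assoc g1)
    also have "\<dots> = Phalf *v ((Uo ** Phat) *v x)" by (simp only: matrix_vector_mul_assoc matrix_mul_assoc)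
    finally have "Uo *v (Phat *v x) = Phalf *v ((Uo ** Phat) *v x)" .
    then show "Uo *v (Phat *v x) \<in> ?H" by blast
  qed
  have s2: "(\<lambda>x. Ue *v x) ` ?H \<subseteq> ?R"
  proof clarify
    fix x
    have "Ue *v (Phalf *v x) = (Phat ** Ue ** Phalf) *v x" by (simp only: matrix_vector_mul_assoc g2)
    also have "\<dots> = Phat *v ((Ue ** Phalf) *v x)" by (simp only: matrix_vector_mul_assoc matrix_mul_assoc)
    finally have "Ue *v (Phalf *v x) = Phat *v ((Ue ** Phalf) *v x)" .
    then show "Ue *v (Phalf *v x) \<in> ?R" by blast
  qed
  have injo: "inj (\<lambda>x. Uo *v x)"
    by (rule inj_on_inverseI[where g = "\<lambda>x. Uo' *v x"]) (simp add: matrix_vector_mul_assoc io)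
  have inje: "inj (\<lambda>x. Ue *v x)"
    by (rule inj_on_inverseI[where g = "\<lambda>x. Ue' *v x"]) (simp add: matrix_vector_mul_assoc ie)
  have subR: "subspace ?R" and subH: "subspace ?H"
    by (simp_all add: subspace_UNIV linear_subspace_image)
  have dR: "dim ((\<lambda>x. Uo *v x) ` ?R) = dim ?R"
    by (rule dim_image_eq) (auto intro: inj_on_subset[OF injo])
  have dH: "dim ((\<lambda>x. Ue *v x) ` ?H) = dim ?H"
    by (rule dim_image_eq) (auto intro: inj_on_subset[OF inje])
  have le1: "dim ?R \<le> dim ?H" using dR dim_subset[OF s1] by simp
  have le2: "dim ?H \<le> dim ?R" using dH dim_subset[OF s2] by simp
  have e1: "(\<lambda>x. Uo *v x) ` ?R = ?H"
    by (rule subspace_dim_equal[OF _ subH s1]) (use subR dR le2 in \<open>simp_all add: linear_subspace_image\<close>)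
  have e2: "(\<lambda>x. Ue *v x) ` ?H = ?R"
    by (rule subspace_dim_equal[OF _ subR s2]) (use subH dH le1 in \<open>simp_all add: linear_subspace_image\<close>)
  have s3: "(\<lambda>x. (Ue ** Uo) *v x) ` ?R \<subseteq> ?R"
  proof clarify
    fix x
    have "(Ue ** Uo) *v (Phat *v x) = Ue *v (Uo *v (Phat *v x))" by (simp add: matrix_vector_mul_assoc matrix_mul_assoc)
    moreover have "Uo *v (Phat *v x) \<in> ?H" using s1 by blast
    ultimately show "(Ue ** Uo) *v (Phat *v x) \<in> ?R" using s2 by auto
  qed
  show ?thesis using e1 e2 s3 by blast
qed

theorem mainTheorem8:
  fixes mul :: "complex ^ 'b::finite \<Rightarrow> complex ^ 'b \<Rightarrow> complex ^ 'b"
    and one :: "complex ^ 'b"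
    and cop :: "complex ^ 'b \<Rightarrow> complex ^ ('b \<times> 'b)"
    and cou :: "complex ^ 'b \<Rightarrow> complex"
    and S st :: "complex ^ 'b \<Rightarrow> complex ^ 'b"
    and \<rho> :: "complex ^ 'b \<Rightarrow> complex ^ 'd::finite ^ 'd"
    and v :: "'d \<Rightarrow> 'd \<Rightarrow> complex ^ 'b"
    and W P Q U :: "complex ^ ('d \<times> 'd) ^ ('d \<times> 'd)"
  assumes A: "c_star_weak_hopf mul one cop cou S st"
    and rho: "star_rep mul one st \<rho>"
    and v: "corep cop cou v"
    and Sv: "\<forall>i j. S (v i j) = st (v j i)"
    and W: "\<forall>i a b j. W $ (i, a) $ (b, j) = \<rho> (v i j) $ a $ b"
    and P: "\<forall>i a j b. P $ (i, a) $ (j, b) =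
              (\<Sum>p\<in>UNIV. \<Sum>q\<in>UNIV. cop one $ (p, q) * cou (mul (ebas p) (v i j)) * \<rho> (ebas q) $ a $ b)"
    and Q: "\<forall>a i b j. Q $ (a, i) $ (b, j) =
              (\<Sum>p\<in>UNIV. \<Sum>q\<in>UNIV. cop one $ (p, q) * \<rho> (ebas p) $ a $ b * cou (mul (v i j) (ebas q)))"
    and U: "unitary_mat U" "W = P ** U" "W = U ** Q"
    and L: "CARD('L::finite) \<ge> 2"
  defines "Phat \<equiv> (prod_int_half P :: complex ^ ('d ^ 'L bit0) ^ ('d ^ 'L bit0)) ** prod_half_int Q"
    and "Phalf \<equiv> (prod_int_half Q :: complex ^ ('d ^ 'L bit0) ^ ('d ^ 'L bit0)) ** prod_half_int P"
    and "Uo \<equiv> (prod_half_int U :: complex ^ ('d ^ 'L bit0) ^ ('d ^ 'L bit0))"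
    and "Ue \<equiv> (prod_int_half U :: complex ^ ('d ^ 'L bit0) ^ ('d ^ 'L bit0))"
  shows "Phalf ** Uo ** Phat = Uo ** Phat \<and>
      Phat ** Ue ** Phalf = Ue ** Phalf \<and>
      (\<lambda>x. Uo *v x) ` range (\<lambda>x. Phat *v x) = range (\<lambda>x. Phalf *v x) \<and>
      (\<lambda>x. Ue *v x) ` range (\<lambda>x. Phalf *v x) = range (\<lambda>x. Phat *v x) \<and>
      (\<lambda>x. (Ue ** Uo) *v x) ` range (\<lambda>x. Phat *v x) \<subseteq> range (\<lambda>x. Phat *v x)"
proof -
  interpret wh mul one cop cou S st \<rho> v by (rule wh.intro[OF A rho v Sv])
  define n where "n = CARD('L)"
  have n2: "2 \<le> n" using L n_def by simp
  have Pe: "P $ (i, a) $ (j, b) = \<rho> (et (v i j)) $ a $ b" for i a j b using P by (simp add: rho_et)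
  have Qe: "Q $ (a, i) $ (b, j) = \<rho> (es (v i j)) $ a $ b" for a i b j using Q by (simp add: rho_es)
  have We: "W $ (i, a) $ (b, j) = \<rho> (v i j) $ a $ b" for i a b j using W by simp
  have HPQ: "(\<Sum>a\<in>UNIV. P $ (x0, x1) $ (y0, a) * Q $ (a, x2) $ (y1, y2))
             = (\<Sum>a\<in>UNIV. Q $ (x1, x2) $ (a, y2) * P $ (x0, a) $ (y0, y1))" for x0 x1 x2 y0 y1 y2
    by (simp only: Pe Qe M1m)
  have HQP: "(\<Sum>a\<in>UNIV. Q $ (x0, x1) $ (y0, a) * P $ (a, x2) $ (y1, y2))
             = (\<Sum>a\<in>UNIV. P $ (x1, x2) $ (a, y2) * Q $ (x0, a) $ (y0, y1))" for x0 x1 x2 y0 y1 y2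
  proof -
    have "(\<Sum>a\<in>UNIV. \<rho> (es (v x1 a)) $ x0 $ y0 * \<rho> (et (v a y1)) $ x2 $ y2) =
          (\<Sum>a\<in>UNIV. \<rho> (es (v a y1)) $ x0 $ y0 * \<rho> (et (v x1 a)) $ x2 $ y2)"
      by (rule M2m[symmetric])
    then show ?thesis by (simp only: Pe Qe mult.commute)
  qed
  have H4: "(\<Sum>c\<in>UNIV. \<Sum>e\<in>UNIV. Q $ (x1, x2) $ (c, e) * (\<Sum>b\<in>UNIV. W $ (x0, c) $ (y0, b) *
        (\<Sum>a\<in>UNIV. W $ (e, x3) $ (a, y3) * P $ (b, a) $ (y1, y2))))
    = (\<Sum>b\<in>UNIV. W $ (x0, x1) $ (y0, b) * (\<Sum>a\<in>UNIV. W $ (x2, x3) $ (a, y3) * P $ (b, a) $ (y1, y2)))"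
    for x0 x1 x2 x3 y0 y1 y2 y3
  proof -
    have "(\<Sum>c\<in>UNIV. \<Sum>e\<in>UNIV. Q $ (x1, x2) $ (c, e) * (\<Sum>b\<in>UNIV. W $ (x0, c) $ (y0, b) *
        (\<Sum>a\<in>UNIV. W $ (e, x3) $ (a, y3) * P $ (b, a) $ (y1, y2)))) =
      (\<Sum>c\<in>UNIV. \<Sum>e\<in>UNIV. \<Sum>b\<in>UNIV. \<rho> (es (v x2 e)) $ x1 $ c * \<rho> (v x0 b) $ c $ y0 *
        (\<Sum>a\<in>UNIV. \<rho> (v e y3) $ x3 $ a * \<rho> (et (v b y1)) $ a $ y2))"
      by (simp add: Pe Qe We sum_distrib_left mult.assoc)
    also have "\<dots> = (\<Sum>e\<in>UNIV. \<Sum>b\<in>UNIV. \<Sum>c\<in>UNIV. \<rho> (es (v x2 e)) $ x1 $ c * \<rho> (v x0 b) $ c $ y0 *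
        (\<Sum>a\<in>UNIV. \<rho> (v e y3) $ x3 $ a * \<rho> (et (v b y1)) $ a $ y2))"
      apply (rule trans[OF sum.swap], rule sum.cong[OF refl])
      apply (rule trans[OF sum.swap])
      by simp
    also have "\<dots> = (\<Sum>e\<in>UNIV. \<Sum>b\<in>UNIV. \<rho> (mul (es (v x2 e)) (v x0 b)) $ x1 $ y0 * \<rho> (mul (v e y3) (et (v b y1))) $ x3 $ y2)"
      by (simp only: rho_mul_entry sum_distrib_right)
    also have "\<dots> = (\<Sum>b\<in>UNIV. \<rho> (v x0 b) $ x1 $ y0 * \<rho> (mul (v x2 y3) (et (v b y1))) $ x3 $ y2)"
      by (rule G3m)
    also have "\<dots> = (\<Sum>b\<in>UNIV. W $ (x0, x1) $ (y0, b) * (\<Sum>a\<in>UNIV. W $ (x2, x3) $ (a, y3) * P $ (b, a) $ (y1, y2)))"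
      by (simp add: Pe We rho_mul_entry)
    finally show ?thesis .
  qed
  have WWP: "W ** adj W = P"
  proof -
    have "(W ** adj W) $ (i, a) $ (j, b) = P $ (i, a) $ (j, b)" for i a j b
    proof -
      have "(W ** adj W) $ (i, a) $ (j, b) = (\<Sum>c\<in>UNIV. \<Sum>k\<in>UNIV. \<rho> (v i k) $ a $ c * cnj (\<rho> (v j k) $ b $ c))"
        by (simp add: matrix_matrix_mult_def adj_def We sum_pairs)
      also have "\<dots> = (\<Sum>k\<in>UNIV. (\<rho> (v i k) ** adj (\<rho> (v j k))) $ a $ b)"
        by (subst sum.swap) (simp add: matrix_matrix_mult_def adj_def)
      also have "\<dots> = (\<Sum>k\<in>UNIV. \<rho> (v i k) ** adj (\<rho> (v j k))) $ a $ b"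
        by (simp add: sum_component)
      also have "\<dots> = P $ (i, a) $ (j, b)" by (simp add: WWm Pe)
      finally show ?thesis .
    qed
    then show ?thesis by (simp add: vec_eq_iff)
  qed
  have PP: "P = P ** adj P"
  proof -
    have "P = P ** U ** adj (P ** U)" using WWP U(2) by simp
    also have "\<dots> = P ** (U ** adj U) ** adj P" by (simp add: adj_mult matrix_mul_assoc)
    also have "\<dots> = P ** adj P" using U(1) by (simp add: unitary_mat_def matrix_mul_rid)
    finally show ?thesis .
  qed
  have PW: "P ** W = W"
  proof -
    have "adj P = P" using PP by (metis adj_mult adj_adj)
    then have "P ** P = P" using PP by simp
    then show ?thesis using U(2) by (simp add: matrix_mul_assoc)
  qed
  have UQ: "U ** Q = W" using U(3) by simp
  note ctx = n_def n2
  have Ue_Phalf: "Ue ** Phalf = prod_int_half W ** prod_half_int P"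
    unfolding Ue_def Phalf_def by (simp add: matrix_mul_assoc zip_ih[OF ctx] UQ)
  have Uo_Phat: "Uo ** Phat = prod_half_int W ** prod_int_half P"
  proof -
    have "Uo ** Phat = prod_half_int U ** (prod_half_int Q ** prod_int_half P)"
      unfolding Uo_def Phat_def by (simp only: comm_PQ[OF ctx HPQ HQP])
    also have "\<dots> = prod_half_int W ** prod_int_half P"
      by (simp add: matrix_mul_assoc zip_hi[OF ctx] UQ)
    finally show ?thesis .
  qed
  have g1: "Phalf ** Uo ** Phat = Uo ** Phat"
  proof -
    have "Phalf ** Uo ** Phat = Phalf ** (Uo ** Phat)" by (simp only: matrix_mul_assoc)
    also have "\<dots> = prod_int_half Q ** ((prod_half_int P ** prod_half_int W) ** prod_int_half P)"
      unfolding Uo_Phat Phalf_def by (simp only: matrix_mul_assoc)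
    also have "\<dots> = prod_int_half Q ** (prod_half_int W ** prod_int_half P)"
      by (simp only: zip_hi[OF ctx] PW)
    also have "\<dots> = prod_half_int W ** prod_int_half P"
      by (rule fix1[OF ctx H4])
    finally show ?thesis using Uo_Phat by simp
  qed
  have g2: "Phat ** Ue ** Phalf = Ue ** Phalf"
  proof -
    have "Phat ** Ue ** Phalf = prod_int_half P ** (prod_half_int Q ** (prod_int_half W ** prod_half_int P))"
      unfolding Phat_def by (simp only: matrix_mul_assoc[symmetric] Ue_Phalf)
    also have "\<dots> = prod_int_half P ** (prod_int_half W ** prod_half_int P)"
      by (simp only: fix2[OF ctx H4])
    also have "\<dots> = prod_int_half W ** prod_half_int P"
      by (simp only: matrix_mul_assoc zip_ih[OF ctx] PW)
    finally show ?thesis using Ue_Phalf by simp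
  qed
  have io: "prod_half_int (adj U) ** Uo = mat 1"
    unfolding Uo_def using U(1) by (simp add: zip_hi[OF ctx] unitary_mat_def one_hi[OF ctx])
  have ie: "prod_int_half (adj U) ** Ue = mat 1"
    unfolding Ue_def using U(1) by (simp add: zip_ih[OF ctx] unitary_mat_def one_ih[OF ctx])
  show ?thesis using g1 g2 ranges[OF g1 g2 io ie] by blast
qed

end
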